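(* Suppose Assumption 1 (stated in the context) holds. Then, for any level $\ell=1,2,\dots,\mathsf{L}$: (1) The Markov chain on $(\mathsf{X}^2,\mathcal{B}(\mathsf{X}^2))$ generated by the joint kernel $\bm p_\ell$ has a unique invariant probability measure $\nu_\ell$. (2) This chain is uniformly ergodic: there exist a bounded, $\nu_\ell$-integrable function $V_{\ell-1,\ell}:\mathsf{X}^2\to[1,V_{\max,\ell}]$ (with $V_{\max,\ell}<\infty$), constants $r\in(0,1)$ and $M\in(0,\infty)$ such that $$\sup_{|f|\le V_{\ell-1,\ell}}\Big|(\bm P_\ell^n f)(\bm\theta_\ell)-\int_{\mathsf{X}^2} f\,\mathrm{d}\nu_\ell\Big|\le M V_{\max,\ell}\, r^n\qquad\forall \bm\theta_\ell\in\mathsf{X}^2,\ n\in\mathbb{N},$$ where the supremum is over all $\nu_\ell$-measurable $f:\mathsf{X}^2\to\mathbb{R}$ with $|f(\bm\theta_\ell)|\le V_{\ell-1,\ell}(\bm\theta_\ell)$ for all $\bm\theta_\ell\in\mathsf{X}^2$.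
   Context: Setting: $\mathsf{X}$ is a separable Banach space with Borel $\sigma$-algebra $\mathcal{B}(\mathsf{X})$, $\mu_{\mathrm{pr}}$ is a (prior) probability measure on $\mathsf{X}$. For levels $j=0,1,\dots,\mathsf{L}$, $\mu^y_j$ is a probability measure (posterior) on $\mathsf{X}$ with density $\pi^y_j$ with respect to $\mu_{\mathrm{pr}}$. For $\ell=1,\dots,\mathsf{L}$, $Q_\ell$ is a probability density with respect to $\mu_{\mathrm{pr}}$ (the independent proposal). For $j\in\{\ell-1,\ell\}$ and $\theta,z\in\mathsf{X}$ define the acceptance probability $\alpha_j(\theta,z)=\min\{1,\frac{\pi^y_j(z)Q_\ell(\theta)}{\pi^y_j(\theta)Q_\ell(z)}\}$. Joint kernel: for $\bm\theta_\ell=(\theta_{\ell,\ell-1},\theta_{\ell,\ell})\in\mathsf{X}^2$ and $A\in\mathcal{B}(\mathsf{X}^2)$, $\bm p_\ell(\bm\theta_\ell,A)=\int_\mathsf{X}\min\{\alpha_{\ell-1}(\theta_{\ell,\ell-1},z),\alpha_\ell(\theta_{\ell,\ell},z)\}\mathbf 1_{\{(z,z)\in A\}}Q_\ell(z)\mu_{\mathrm{pr}}(\mathrm{d}z)+\int_\mathsf{X}(\alpha_{\ell-1}(\theta_{\ell,\ell-1},z)-\alpha_\ell(\theta_{\ell,\ell},z))^+\mathbf 1_{\{(z,\theta_{\ell,\ell})\in A\}}Q_\ell(z)\mu_{\mathrm{pr}}(\mathrm{d}z)+\int_\mathsf{X}(\alpha_\ell(\theta_{\ell,\ell},z)-\alpha_{\ell-1}(\theta_{\ell,\ell-1},z))^+\mathbf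 1_{\{(\theta_{\ell,\ell-1},z)\in A\}}Q_\ell(z)\mu_{\mathrm{pr}}(\mathrm{d}z)+\mathbf 1_{\{\bm\theta_\ell\in A\}}\big(1-\int_\mathsf{X}\max\{\alpha_{\ell-1}(\theta_{\ell,\ell-1},z),\alpha_\ell(\theta_{\ell,\ell},z)\}Q_\ell(z)\mu_{\mathrm{pr}}(\mathrm{d}z)\big)$. (This is the kernel of two independent Metropolis–Hastings chains targeting $\mu^y_{\ell-1},\mu^y_\ell$ that share the same proposal $z\sim Q_\ell\mu_{\mathrm{pr}}$ and the same uniform random number for acceptance.) $\bm P_\ell$ denotes the associated Markov operator $(\bm P_\ell f)(\bm\theta)=\int f(\bm\eta)\bm p_\ell(\bm\theta,\mathrm{d}\bm\eta)$. Assumption 1: for all $\ell=1,\dots,\mathsf{L}$: (1.1) $Q_\ell$ is continuous and $Q_\ell(z)>0$ for all $z\in\mathsf{X}$; (1.2) $\pi^y_\ell$ is continuous and $\pi^y_\ell(z)>0$ for all $z$ (for all levels); (1.3) for $j=\ell-1,\ell$ and every $c_r>0$, the set $\{\theta\in\mathsf{X}: Q_\ell(\theta)/\pi^y_j(\theta)\le c_r\}$ is compact; (1.4) there exists $c\in(0,1)$ independent of $\ell$ with $\operatorname{ess\,inf}_{z\in\mathsf{X}}Q_\ell(z)/\pi^y_j(z)\ge c$ for $j=\ell-1,\ell$; (1.5) there exist $r>1$, $C_r>0$ independent of $\ell$ with $\int_\mathsf{X}Q_\ell^r\,\mathrm{d}\mu_{\mathrm{pr}}\le C_r$. *)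

theory Defs
  imports "HOL-Probability.Probability"
begin

text \<open>Acceptance probability alpha_j(theta,z) for the independence sampler of level l
  (proposal density Q l), targeting the posterior density ppi j (densities w.r.t. the prior).\<close>
definition alpha :: "(nat \<Rightarrow> 'a \<Rightarrow> real) \<Rightarrow> (nat \<Rightarrow> 'a \<Rightarrow> real) \<Rightarrow> nat \<Rightarrow> nat \<Rightarrow> 'a \<Rightarrow> 'a \<Rightarrow> real"
  where "alpha ppi Q l j theta z = min 1 ((ppi j z * Q l theta) / (ppi j theta * Q l z))"

definition joint_kernel ::
  "'a measure \<Rightarrow> (nat \<Rightarrow> 'a \<Rightarrow> real) \<Rightarrow> (nat \<Rightarrow> 'a \<Rightarrow> real) \<Rightarrow> nat \<Rightarrow> 'a \<times> 'a \<Rightarrow> ('a \<times> 'a) set \<Rightarrow> real"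
  where "joint_kernel mu ppi Q l th A =
     (\<integral>z. min (alpha ppi Q l (l - 1) (fst th) z) (alpha ppi Q l l (snd th) z)
            * indicator A (z, z) * Q l z \<partial>mu)
   + (\<integral>z. max 0 (alpha ppi Q l (l - 1) (fst th) z - alpha ppi Q l l (snd th) z)
            * indicator A (z, snd th) * Q l z \<partial>mu)
   + (\<integral>z. max 0 (alpha ppi Q l l (snd th) z - alpha ppi Q l (l - 1) (fst th) z)
            * indicator A (fst th, z) * Q l z \<partial>mu)
   + indicator A th * (1 - (\<integral>z. max (alpha ppi Q l (l - 1) (fst th) z) (alpha ppi Q l l (snd th) z)
            * Q l z \<partial>mu))"

definition joint_kernel_measure ::
  "'a measure \<Rightarrow> (nat \<Rightarrow> 'a \<Rightarrow> real) \<Rightarrow> (nat \<Rightarrow> 'a \<Rightarrow> real) \<Rightarrow> nat \<Rightarrow> 'a \<times> 'a \<Rightarrow> ('a \<times> 'a :: topological_space) measure"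
  where "joint_kernel_measure mu ppi Q l th =
     measure_of UNIV (sets borel) (\<lambda>A. ennreal (joint_kernel mu ppi Q l th A))"

definition markov_op ::
  "'a measure \<Rightarrow> (nat \<Rightarrow> 'a \<Rightarrow> real) \<Rightarrow> (nat \<Rightarrow> 'a \<Rightarrow> real) \<Rightarrow> nat \<Rightarrow> ('a \<times> 'a :: topological_space \<Rightarrow> real) \<Rightarrow> 'a \<times> 'a \<Rightarrow> real"
  where "markov_op mu ppi Q l f th = (\<integral>eta. f eta \<partial>(joint_kernel_measure mu ppi Q l th))"

definition invariant_prob ::
  "'a measure \<Rightarrow> (nat \<Rightarrow> 'a \<Rightarrow> real) \<Rightarrow> (nat \<Rightarrow> 'a \<Rightarrow> real) \<Rightarrow> nat \<Rightarrow> ('a \<times> 'a :: topological_space) measure \<Rightarrow> bool"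
  where "invariant_prob mu ppi Q l nu \<longleftrightarrow>
     prob_space nu \<and> sets nu = sets borel \<and>
     (\<forall>A \<in> sets borel. measure nu A = (\<integral>th. joint_kernel mu ppi Q l th A \<partial>nu))"

end

theory Submission
  imports Defs
begin

locale doeblin =
  fixes M :: "'b measure" and K :: "'b \<Rightarrow> 'b measure" and E :: "'b measure"
  assumes spM: "space M = UNIV"
    and K: "K \<in> M \<rightarrow>\<^sub>M prob_algebra M"
    and finE: "finite_measure E" and setsE: "sets E = sets M"
    and Ele: "\<And>x A. emeasure E A \<le> emeasure (K x) A"
    and eps: "0 < measure E UNIV" "measure E UNIV < 1"
begin

definition P :: "('b \<Rightarrow> real) \<Rightarrow> 'b \<Rightarrow> real" where "P f x = (\<integral>y. f y \<partial>K x)"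

definition bnd :: "('b \<Rightarrow> real) \<Rightarrow> real \<Rightarrow> bool" where "bnd g B \<longleftrightarrow> g \<in> borel_measurable M \<and> (\<forall>x. \<bar>g x\<bar> \<le> B)"

abbreviation "eps \<equiv> measure E UNIV"

lemma K_sets: "sets (K x) = sets M" and K_prob: "prob_space (K x)"
  using measurable_space[OF K, of x] spM by (auto simp: space_prob_algebra)

lemma K_int: assumes "bnd g B" shows "integrable (K x) g"
proof -
  interpret prob_space "K x" by (rule K_prob)
  show ?thesis using assms unfolding bnd_def
    by (intro integrable_const_bound[where B=B]) (auto simp: measurable_cong_sets[OF K_sets refl])
qed

lemma E_int: assumes "bnd g B" shows "integrable E g"
proof -
  interpret finite_measure E by (rule finE)
  show ?thesis using assms unfolding bnd_def
    by (intro integrable_const_bound[where B=B]) (auto simp: measurable_cong_sets[OF setsE refl])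
qed

lemma P_meas: "g \<in> borel_measurable M \<Longrightarrow> P g \<in> borel_measurable M"
  unfolding P_def
  by (rule measurable_compose[OF measurable_prob_algebraD[OF K] integral_measurable_subprob_algebra])

lemma P_range: assumes "g \<in> borel_measurable M" "\<And>x. a \<le> g x" "\<And>x. g x \<le> b"
  shows "a \<le> P g x" "P g x \<le> b"
proof -
  interpret prob_space "K x" by (rule K_prob)
  have "\<bar>g x\<bar> \<le> \<bar>a\<bar> + \<bar>b\<bar>" for x
  proof -
    have "a \<le> g x" "g x \<le> b" using assms by auto
    moreover have "-\<bar>a\<bar> \<le> a" "a \<le> \<bar>a\<bar>" "-\<bar>b\<bar> \<le> b" "b \<le> \<bar>b\<bar>" by auto
    ultimately show ?thesis unfolding abs_le_iff by linarith
  qed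
  then have "bnd g (\<bar>a\<bar> + \<bar>b\<bar>)" using assms(1) unfolding bnd_def by blast
  note i = K_int[OF this, of x]
  show "a \<le> P g x" unfolding P_def using i assms by (intro integral_ge_const) auto
  show "P g x \<le> b" unfolding P_def using i assms by (intro integral_le_const) auto
qed

lemma bndD: assumes "bnd g B" shows "g \<in> borel_measurable M" "\<And>x. -B \<le> g x" "\<And>x. g x \<le> B"
proof -
  show "g \<in> borel_measurable M" using assms bnd_def by auto
  fix x have "\<bar>g x\<bar> \<le> B" using assms bnd_def by auto
  then show "-B \<le> g x" "g x \<le> B" using abs_le_D1[of "g x" B] abs_le_D2[of "g x" B] by linarith+
qed

lemma bnd_P: assumes "bnd g B" shows "bnd (P g) B"
proof -
  note g = bndD[OF assms]
  have "\<bar>P g x\<bar> \<le> B" for x using P_range(1)[OF g, of x] P_range(2)[OF g, of x] unfolding abs_le_iff by linarith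
  then show ?thesis using P_meas[OF g(1)] unfolding bnd_def by auto
qed

lemma E_le_K: fixes g :: "'b \<Rightarrow> real" assumes "g \<in> borel_measurable M" "\<And>x. 0 \<le> g x" "\<And>x. g x \<le> B"
  shows "(\<integral>y. g y \<partial>E) \<le> (\<integral>y. g y \<partial>K x)"
proof -
  interpret prob_space "K x" by (rule K_prob)
  have m1: "g \<in> borel_measurable E" using assms(1) measurable_cong_sets[OF setsE refl] by blast
  have m2: "g \<in> borel_measurable (K x)" using assms(1) measurable_cong_sets[OF K_sets refl] by blast
  have le: "E \<le> K x"
  proof -
    have sp: "space E = space (K x)" using sets_eq_imp_space_eq[of E "K x"] setsE K_sets by simp
    have st: "sets E = sets (K x)" using setsE K_sets by simp
    have em: "emeasure E \<le> emeasure (K x)" unfolding le_fun_def using Ele by blast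
    show ?thesis unfolding le_measure_iff by (simp only: sp st em if_True simp_thms)
  qed
  have ineq: "(\<integral>\<^sup>+y. ennreal (g y) \<partial>E) \<le> (\<integral>\<^sup>+y. ennreal (g y) \<partial>K x)"
    by (rule nn_integral_mono_measure) (use le setsE K_sets in simp_all)
  have "(\<integral>\<^sup>+y. ennreal (g y) \<partial>K x) \<le> (\<integral>\<^sup>+y. ennreal B \<partial>K x)"
    using assms by (intro nn_integral_mono ennreal_leI) simp
  also have "\<dots> = ennreal B" using emeasure_space_1 by simp
  finally have le1: "(\<integral>\<^sup>+y. ennreal (g y) \<partial>K x) \<le> ennreal B" .
  have fin: "(\<integral>\<^sup>+y. ennreal (g y) \<partial>K x) < top" using le1 by (simp add: le_less_trans)
  have e1: "(\<integral>y. g y \<partial>E) = enn2real (\<integral>\<^sup>+y. ennreal (g y) \<partial>E)"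
    by (rule integral_eq_nn_integral) (use m1 assms(2) in auto)
  have e2: "(\<integral>y. g y \<partial>K x) = enn2real (\<integral>\<^sup>+y. ennreal (g y) \<partial>K x)"
    by (rule integral_eq_nn_integral) (use m2 assms(2) in auto)
  show ?thesis unfolding e1 e2 by (rule enn2real_mono[OF ineq fin])
qed

lemma spE: "space E = UNIV" by (metis sets_eq_imp_space_eq setsE spM)

lemma contract: assumes g: "g \<in> borel_measurable M" "\<And>x. a \<le> g x" "\<And>x. g x \<le> b"
  shows "\<exists>a' b'. b' - a' = (1 - eps) * (b - a) \<and> (\<forall>x. a' \<le> P g x \<and> P g x \<le> b')"
proof -
  interpret E: finite_measure E by (rule finE)
  have ab: "\<And>x. \<bar>g x\<bar> \<le> \<bar>a\<bar> + \<bar>b\<bar>" "\<And>x. \<bar>g x - a\<bar> \<le> 2 * (\<bar>a\<bar> + \<bar>b\<bar>)" "\<And>x. \<bar>b - g x\<bar> \<le> 2 * (\<bar>a\<bar> + \<bar>b\<bar>)"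
  proof -
    fix x
    have "a \<le> g x" "g x \<le> b" using g by auto
    moreover have "-\<bar>a\<bar> \<le> a" "a \<le> \<bar>a\<bar>" "-\<bar>b\<bar> \<le> b" "b \<le> \<bar>b\<bar>" by auto
    ultimately show "\<bar>g x\<bar> \<le> \<bar>a\<bar> + \<bar>b\<bar>" "\<bar>g x - a\<bar> \<le> 2 * (\<bar>a\<bar> + \<bar>b\<bar>)" "\<bar>b - g x\<bar> \<le> 2 * (\<bar>a\<bar> + \<bar>b\<bar>)"
      unfolding abs_le_iff by auto
  qed
  have bg: "bnd g (\<bar>a\<bar> + \<bar>b\<bar>)" using g(1) ab(1) unfolding bnd_def by blast
  have bga: "bnd (\<lambda>y. g y - a) (2 * (\<bar>a\<bar> + \<bar>b\<bar>))" "bnd (\<lambda>y. b - g y) (2 * (\<bar>a\<bar> + \<bar>b\<bar>))"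
    using g(1) ab(2,3) unfolding bnd_def by auto
  define a' where "a' = a + (\<integral>y. g y - a \<partial>E)"
  define b' where "b' = b - (\<integral>y. b - g y \<partial>E)"
  have "b' - a' = (b - a) - ((\<integral>y. b - g y \<partial>E) + (\<integral>y. g y - a \<partial>E))"
    unfolding a'_def b'_def by simp
  also have "(\<integral>y. b - g y \<partial>E) + (\<integral>y. g y - a \<partial>E) = (\<integral>y. (b - g y) + (g y - a) \<partial>E)"
    using E_int[OF bga(2)] E_int[OF bga(1)] by (rule Bochner_Integration.integral_add[symmetric])
  also have "\<dots> = (b - a) * eps" using spE by simp
  finally have 1: "b' - a' = (1 - eps) * (b - a)" by (simp add: algebra_simps)
  have 2: "a' \<le> P g x \<and> P g x \<le> b'" for x
  proof -
    interpret prob_space "K x" by (rule K_prob)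
    have i: "integrable (K x) g" using K_int[OF bg] .
    have e1: "(\<integral>y. g y - a \<partial>K x) = P g x - a"
      unfolding P_def using Bochner_Integration.integral_diff[OF i, of "\<lambda>_. a"] prob_space by simp
    have e2: "(\<integral>y. b - g y \<partial>K x) = b - P g x"
      unfolding P_def using Bochner_Integration.integral_diff[OF _ i, of "\<lambda>_. b"] prob_space by simp
    have "(\<integral>y. g y - a \<partial>E) \<le> (\<integral>y. g y - a \<partial>K x)"
      using bga(1) g by (intro E_le_K[where B="b - a"]) (auto simp: bnd_def diff_mono)
    moreover have "(\<integral>y. b - g y \<partial>E) \<le> (\<integral>y. b - g y \<partial>K x)"
      using bga(2) g by (intro E_le_K[where B="b - a"]) (auto simp: bnd_def)
    ultimately show ?thesis unfolding a'_def b'_def e1 e2 by simp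
  qed
  show ?thesis using 1 2 by blast
qed

lemma Pn_meas: "g \<in> borel_measurable M \<Longrightarrow> (P ^^ n) g \<in> borel_measurable M"
  by (induction n) (auto intro: P_meas)

lemma Pn_range: assumes g: "g \<in> borel_measurable M" "\<And>x. a \<le> g x" "\<And>x. g x \<le> b"
  shows "a \<le> (P ^^ n) g x \<and> (P ^^ n) g x \<le> b"
proof (induction n arbitrary: x)
  case 0 then show ?case using g by simp
next
  case (Suc n)
  have "(P ^^ n) g \<in> borel_measurable M" using Pn_meas[OF g(1)] .
  then show ?case using P_range[of "(P ^^ n) g" a b x] Suc by auto
qed

lemma iter: assumes g: "g \<in> borel_measurable M" "\<And>x. a \<le> g x" "\<And>x. g x \<le> b"
  shows "\<exists>an bn. bn - an = (1 - eps) ^ n * (b - a) \<and>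
           (\<forall>m\<ge>n. \<forall>x. an \<le> (P ^^ m) g x \<and> (P ^^ m) g x \<le> bn)"
proof (induction n)
  case 0 show ?case using Pn_range[OF g] by (intro exI[of _ a] exI[of _ b]) auto
next
  case (Suc n)
  then obtain an bn where ab: "bn - an = (1 - eps) ^ n * (b - a)"
    "\<forall>m\<ge>n. \<forall>x. an \<le> (P ^^ m) g x \<and> (P ^^ m) g x \<le> bn" by blast
  have mn: "(P ^^ n) g \<in> borel_measurable M" using Pn_meas[OF g(1)] .
  obtain a' b' where c: "b' - a' = (1 - eps) * (bn - an)" "\<forall>x. a' \<le> P ((P ^^ n) g) x \<and> P ((P ^^ n) g) x \<le> b'"
    using contract[OF mn, of an bn] ab(2) by blast
  have "a' \<le> (P ^^ m) g x \<and> (P ^^ m) g x \<le> b'" if mn1: "m \<ge> Suc n" for m x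
  proof -
    obtain d where d: "m = Suc n + d" using le_Suc_ex[OF mn1] by blast
    have "(P ^^ m) g = (P ^^ (d + Suc n)) g" unfolding d by (simp only: add.commute)
    also have "\<dots> = (P ^^ d) ((P ^^ Suc n) g)" by (simp only: funpow_add comp_apply)
    finally have "(P ^^ m) g = (P ^^ (m - Suc n)) (P ((P ^^ n) g))" using d by simp
    moreover have "P ((P ^^ n) g) \<in> borel_measurable M" using P_meas[OF mn] .
    ultimately show ?thesis using Pn_range[of "P ((P ^^ n) g)" a' b' "m - Suc n" x] c(2) by presburger
  qed
  then show ?case using c(1) ab(1) by (intro exI[of _ a'] exI[of _ b']) auto
qed

definition Lam :: "('b \<Rightarrow> real) \<Rightarrow> real" where "Lam g = lim (\<lambda>n. (P ^^ n) g undefined)"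

lemma delta_lim: "(\<lambda>n. (1 - eps) ^ n * c) \<longlonglongrightarrow> 0"
  using eps by (intro tendsto_mult_left_zero LIMSEQ_power_zero) auto

lemma Lam_bound: assumes g: "g \<in> borel_measurable M" "\<And>x. a \<le> g x" "\<And>x. g x \<le> b"
  shows "\<bar>(P ^^ n) g x - Lam g\<bar> \<le> (1 - eps) ^ n * (b - a)"
    and "(\<lambda>n. (P ^^ n) g undefined) \<longlonglongrightarrow> Lam g"
proof -
  have "\<forall>n. \<exists>an bn. bn - an = (1 - eps) ^ n * (b - a) \<and>
           (\<forall>m\<ge>n. \<forall>x. an \<le> (P ^^ m) g x \<and> (P ^^ m) g x \<le> bn)"
    using iter[OF g] by blast
  from choice[OF this] obtain A where "\<forall>n. \<exists>bn. bn - A n = (1 - eps) ^ n * (b - a) \<and>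
           (\<forall>m\<ge>n. \<forall>x. A n \<le> (P ^^ m) g x \<and> (P ^^ m) g x \<le> bn)" by blast
  from choice[OF this] obtain B where AB: "\<forall>n. B n - A n = (1 - eps) ^ n * (b - a) \<and>
           (\<forall>m\<ge>n. \<forall>x. A n \<le> (P ^^ m) g x \<and> (P ^^ m) g x \<le> B n)" by blast
  have ab1: "B n - A n = (1 - eps) ^ n * (b - a)" for n using AB by blast
  have ab2: "A n \<le> (P ^^ m) g x" "(P ^^ m) g x \<le> B n" if "m \<ge> n" for n m x using AB that by blast+
  define s where "s n = (P ^^ n) g undefined" for n
  have "Cauchy s"
  proof (rule metric_CauchyI)
    fix e :: real assume "0 < e"
    then obtain N where N: "\<And>n. n \<ge> N \<Longrightarrow> norm ((1 - eps) ^ n * (b - a) - 0) < e"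
      using delta_lim[of "b - a", THEN LIMSEQ_D] by blast
    show "\<exists>N. \<forall>m\<ge>N. \<forall>n\<ge>N. dist (s m) (s n) < e"
    proof (intro exI allI impI)
      fix m n assume mN: "m \<ge> N" and nN: "n \<ge> N"
      have "A N \<le> s m" "s m \<le> B N" "A N \<le> s n" "s n \<le> B N"
        using ab2[OF mN] ab2[OF nN] unfolding s_def by auto
      then have "dist (s m) (s n) \<le> B N - A N" unfolding dist_real_def abs_le_iff by linarith
      also have "\<dots> < e" using N[of N] ab1[of N] by simp
      finally show "dist (s m) (s n) < e" .
    qed
  qed
  then have conv: "s \<longlonglongrightarrow> Lam g"
    unfolding Lam_def s_def[symmetric] by (simp add: Cauchy_convergent_iff convergent_LIMSEQ_iff)
  then show "(\<lambda>n. (P ^^ n) g undefined) \<longlonglongrightarrow> Lam g" unfolding s_def .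
  have lo: "A n \<le> Lam g"
  proof (rule LIMSEQ_le_const[OF conv], intro exI allI impI)
    fix m assume "n \<le> m" then show "A n \<le> s m" unfolding s_def by (rule ab2(1))
  qed
  have hi: "Lam g \<le> B n"
  proof (rule LIMSEQ_le_const2[OF conv], intro exI allI impI)
    fix m assume "n \<le> m" then show "s m \<le> B n" unfolding s_def by (rule ab2(2))
  qed
  have "A n \<le> (P ^^ n) g x" "(P ^^ n) g x \<le> B n" using ab2[of n n x] by auto
  then show "\<bar>(P ^^ n) g x - Lam g\<bar> \<le> (1 - eps) ^ n * (b - a)"
    using lo hi ab1[of n] unfolding abs_le_iff by linarith
qed

end

context doeblin begin

definition muN :: "nat \<Rightarrow> 'b measure" where "muN n = ((\<lambda>m. m \<bind> K) ^^ n) (return M undefined)"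

lemma mu_Suc: "muN (Suc n) = muN n \<bind> K" by (simp add: muN_def)

lemma mu_space: "muN n \<in> space (prob_algebra M)"
proof (induction n)
  case 0 show ?case using spM by (simp add: muN_def space_prob_algebra prob_space_return)
next
  case (Suc n) show ?case unfolding mu_Suc space_prob_algebra
    using prob_space_bind'[OF Suc K] sets_bind'[OF Suc K] by simp
qed

lemma mu_prob: "prob_space (muN n)" and mu_sets: "sets (muN n) = sets M"
  using mu_space[of n] by (auto simp: space_prob_algebra)

lemma mu_intg: "bnd g B \<Longrightarrow> integrable (muN n) g"
proof -
  assume b: "bnd g B"
  interpret prob_space "muN n" by (rule mu_prob)
  show ?thesis using b unfolding bnd_def
    by (intro integrable_const_bound[where B=B]) (auto simp: measurable_cong_sets[OF mu_sets refl])
qed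

lemma mu_int: "bnd g B \<Longrightarrow> (\<integral>y. g y \<partial>muN n) = (P ^^ n) g undefined"
proof (induction n arbitrary: g)
  case 0 then show ?case using spM by (simp add: muN_def integral_return bnd_def)
next
  case (Suc n)
  interpret prob_space "muN n" by (rule mu_prob)
  have Km: "K \<in> measurable (muN n) (subprob_algebra M)"
    using measurable_prob_algebraD[OF K] by (simp add: measurable_cong_sets[OF mu_sets refl])
  have "(\<integral>y. g y \<partial>muN (Suc n)) = (\<integral>x. (\<integral>y. g y \<partial>K x) \<partial>muN n)"
    unfolding mu_Suc
  proof (rule integral_bind[where B="B" and B'=1])
    show "g \<in> borel_measurable M" using Suc.prems bnd_def by auto
    show "\<And>x. x \<in> space M \<Longrightarrow> \<bar>g x\<bar> \<le> B" using Suc.prems bnd_def by auto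
    show "K \<in> measurable (muN n) (subprob_algebra M)" by (rule Km)
    show "finite_measure (muN n)" by (rule finite_measure_axioms)
    show "AE x in muN n. emeasure (K x) (space (K x)) \<le> ennreal 1"
      using prob_space.emeasure_space_1[OF K_prob] by simp
  qed
  also have "\<dots> = (\<integral>x. P g x \<partial>muN n)" unfolding P_def ..
  also have "\<dots> = (P ^^ n) (P g) undefined" using Suc.IH[OF bnd_P[OF Suc.prems]] .
  also have "\<dots> = (P ^^ Suc n) g undefined" by (simp add: funpow_Suc_right del: funpow.simps)
  finally show ?case .
qed

lemma Lam_lim: assumes "bnd g B" shows "(\<lambda>n. \<integral>y. g y \<partial>muN n) \<longlonglongrightarrow> Lam g"
  using Lam_bound(2)[OF bndD[OF assms]] mu_int[OF assms] by simp

lemma Lam_mu_bound: assumes "bnd g B" "\<And>x. a \<le> g x" "\<And>x. g x \<le> b"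
  shows "\<bar>(\<integral>y. g y \<partial>muN n) - Lam g\<bar> \<le> (1 - eps) ^ n * (b - a)"
  using Lam_bound(1)[OF bndD(1)[OF assms(1)] assms(2,3)] mu_int[OF assms(1)] by simp

lemma bnd_add: assumes "bnd f B" "bnd g C" shows "bnd (\<lambda>x. f x + g x) (B + C)"
proof -
  have "\<bar>f x + g x\<bar> \<le> B + C" for x
  proof -
    have "\<bar>f x\<bar> \<le> B" "\<bar>g x\<bar> \<le> C" using assms bnd_def by auto
    then show ?thesis using abs_triangle_ineq[of "f x" "g x"] by linarith
  qed
  moreover have "(\<lambda>x. f x + g x) \<in> borel_measurable M" using assms bnd_def by auto
  ultimately show ?thesis unfolding bnd_def by blast
qed

lemma bnd_cmult: assumes "bnd f B" shows "bnd (\<lambda>x. c * f x) (\<bar>c\<bar> * B)"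
proof -
  have "\<bar>c * f x\<bar> \<le> \<bar>c\<bar> * B" for x
  proof -
    have "\<bar>f x\<bar> \<le> B" using assms bnd_def by auto
    then show ?thesis unfolding abs_mult by (rule mult_left_mono) simp
  qed
  moreover have "(\<lambda>x. c * f x) \<in> borel_measurable M" using assms bnd_def by auto
  ultimately show ?thesis unfolding bnd_def by blast
qed

lemma bnd_const: "bnd (\<lambda>x. c) \<bar>c\<bar>" unfolding bnd_def by simp

lemma bnd_ind: "A \<in> sets M \<Longrightarrow> bnd (indicator A) 1"
  unfolding bnd_def by (auto simp: indicator_def)

lemma Lam_add: assumes "bnd f B" "bnd g C" shows "Lam (\<lambda>x. f x + g x) = Lam f + Lam g"
proof (rule LIMSEQ_unique[OF Lam_lim[OF bnd_add[OF assms]]])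
  show "(\<lambda>n. \<integral>y. f y + g y \<partial>muN n) \<longlonglongrightarrow> Lam f + Lam g"
    using tendsto_add[OF Lam_lim[OF assms(1)] Lam_lim[OF assms(2)]]
    by (simp add: Bochner_Integration.integral_add[OF mu_intg[OF assms(1)] mu_intg[OF assms(2)]])
qed

lemma Lam_cmult: assumes "bnd f B" shows "Lam (\<lambda>x. c * f x) = c * Lam f"
proof (rule LIMSEQ_unique[OF Lam_lim[OF bnd_cmult[OF assms]]])
  show "(\<lambda>n. \<integral>y. c * f y \<partial>muN n) \<longlonglongrightarrow> c * Lam f"
    using tendsto_mult_left[OF Lam_lim[OF assms(1)], of c] by simp
qed

lemma Lam_const: "Lam (\<lambda>x. c) = c"
proof (rule LIMSEQ_unique[OF Lam_lim[OF bnd_const]])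
  show "(\<lambda>n. \<integral>y. c \<partial>muN n) \<longlonglongrightarrow> c" using prob_space.prob_space[OF mu_prob] by simp
qed

lemma Lam_diff: assumes "bnd f B" "bnd g C" shows "Lam (\<lambda>x. f x - g x) = Lam f - Lam g"
  using Lam_add[OF assms(1) bnd_cmult[OF assms(2), of "-1"]] Lam_cmult[OF assms(2), of "-1"] by simp

lemma bnd_sum: "finite I \<Longrightarrow> (\<And>i. i \<in> I \<Longrightarrow> bnd (f i) (B i)) \<Longrightarrow> bnd (\<lambda>x. \<Sum>i\<in>I. f i x) (\<Sum>i\<in>I. B i)"
proof (induction I rule: finite_induct)
  case empty then show ?case by (simp add: bnd_def)
next
  case (insert i I)
  then show ?case using bnd_add[of "f i" "B i" "\<lambda>x. \<Sum>i\<in>I. f i x" "\<Sum>i\<in>I. B i"] by simp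
qed

lemma Lam_sum: "finite I \<Longrightarrow> (\<And>i. i \<in> I \<Longrightarrow> bnd (f i) (B i)) \<Longrightarrow> Lam (\<lambda>x. \<Sum>i\<in>I. f i x) = (\<Sum>i\<in>I. Lam (f i))"
proof (induction I rule: finite_induct)
  case empty then show ?case using Lam_const[of 0] by simp
next
  case (insert i I)
  have "Lam (\<lambda>x. \<Sum>i\<in>insert i I. f i x) = Lam (\<lambda>x. f i x + (\<Sum>i\<in>I. f i x))"
    using insert by simp
  also have "\<dots> = Lam (f i) + Lam (\<lambda>x. \<Sum>i\<in>I. f i x)"
    using Lam_add[of "f i" "B i" "\<lambda>x. \<Sum>i\<in>I. f i x" "\<Sum>i\<in>I. B i"] insert bnd_sum[of I f B] by simp
  finally show ?case using insert by simp
qed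

lemma Lam_le: assumes "bnd g B" "\<And>x. a \<le> g x" "\<And>x. g x \<le> b" shows "a \<le> Lam g" "Lam g \<le> b"
proof -
  have lo: "a \<le> (\<integral>y. g y \<partial>muN n)" for n
    using prob_space.integral_ge_const[OF mu_prob mu_intg[OF assms(1)]] assms(2) by simp
  have hi: "(\<integral>y. g y \<partial>muN n) \<le> b" for n
    using prob_space.integral_le_const[OF mu_prob mu_intg[OF assms(1)]] assms(3) by simp
  show "a \<le> Lam g"
    by (rule LIMSEQ_le_const[OF Lam_lim[OF assms(1)]]) (use lo in auto)
  show "Lam g \<le> b"
    by (rule LIMSEQ_le_const2[OF Lam_lim[OF assms(1)]]) (use hi in auto)
qed

lemma Lam_P: assumes "bnd g B" shows "Lam (P g) = Lam g"
proof (rule LIMSEQ_unique[OF Lam_lim[OF bnd_P[OF assms]]])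
  have "(\<integral>y. P g y \<partial>muN n) = (\<integral>y. g y \<partial>muN (Suc n))" for n
    using mu_int[OF bnd_P[OF assms], of n] mu_int[OF assms, of "Suc n"]
    by (simp add: funpow_Suc_right del: funpow.simps)
  then show "(\<lambda>n. \<integral>y. P g y \<partial>muN n) \<longlonglongrightarrow> Lam g"
    using LIMSEQ_Suc[OF Lam_lim[OF assms]] by simp
qed

end

context doeblin begin

lemma Lam_ind_nonneg: assumes "A \<in> sets M" shows "0 \<le> Lam (indicator A)"
  by (rule Lam_le(1)[OF bnd_ind[OF assms], where b=1]) (auto simp: indicator_def)

lemma Lam_ind_mu: assumes "A \<in> sets M"
  shows "Lam (indicator A) \<le> measure (muN n) A + (1 - eps) ^ n"
proof -
  have "\<bar>(\<integral>y. indicator A y \<partial>muN n) - Lam (indicator A)\<bar> \<le> (1 - eps) ^ n * (1 - 0)"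
    by (rule Lam_mu_bound[OF bnd_ind[OF assms]]) (auto simp: indicator_def)
  then have "\<bar>(\<integral>y. indicator A y \<partial>muN n) - Lam (indicator A)\<bar> \<le> (1 - eps) ^ n" by simp
  moreover have "(\<integral>y. indicator A y \<partial>muN n) = measure (muN n) A"
    using spM sets_eq_imp_space_eq[OF mu_sets, of n] by simp
  ultimately show ?thesis unfolding abs_le_iff by linarith
qed

definition nuL :: "'b measure" where
  "nuL = measure_of UNIV (sets M) (\<lambda>A. ennreal (Lam (indicator A)))"

lemma sa: "sigma_algebra UNIV (sets M)" using sets.sigma_algebra_axioms[of M] spM by simp

lemma nu_sets: "sets nuL = sets M"
  unfolding nuL_def using sigma_algebra.sets_measure_of_eq[OF sa] by blast

lemma nu_space: "space nuL = UNIV"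
  unfolding nuL_def using sigma_algebra.space_measure_of_eq[OF sa] by blast

lemma nu_emeasure: assumes "A \<in> sets M" shows "emeasure nuL A = ennreal (Lam (indicator A))"
proof -
  interpret S: sigma_algebra UNIV "sets M" by (rule sa)
  have pos: "positive (sets M) (\<lambda>A. ennreal (Lam (indicator A)))"
  proof -
    have i0: "indicator {} = (\<lambda>x. 0 :: real)" by (rule ext) simp
    have "Lam (indicator {}) = 0" unfolding i0 by (rule Lam_const)
    then show ?thesis unfolding positive_def by simp
  qed
  have add: "additive (sets M) (\<lambda>A. ennreal (Lam (indicator A)))"
    unfolding additive_def
  proof (intro ballI impI)
    fix X Y assume XY: "X \<in> sets M" "Y \<in> sets M" "X \<inter> Y = {}"
    have "indicator (X \<union> Y) = (\<lambda>x. indicator X x + indicator Y x :: real)"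
      using indicator_disj_union[OF XY(3)] by (rule ext)
    then have "Lam (indicator (X \<union> Y)) = Lam (indicator X) + Lam (indicator Y)"
      using Lam_add[OF bnd_ind[OF XY(1)] bnd_ind[OF XY(2)]] by simp
    then show "ennreal (Lam (indicator (X \<union> Y))) = ennreal (Lam (indicator X)) + ennreal (Lam (indicator Y))"
      using Lam_ind_nonneg[OF XY(1)] Lam_ind_nonneg[OF XY(2)] by (simp add: ennreal_plus)
  qed
  have ca: "countably_additive (sets M) (\<lambda>A. ennreal (Lam (indicator A)))"
  proof (rule S.empty_continuous_imp_countably_additive[OF pos add])
    show "\<forall>A\<in>sets M. ennreal (Lam (indicator A)) \<noteq> \<infinity>" by simp
    fix A :: "nat \<Rightarrow> 'b set"
    assume A: "range A \<subseteq> sets M" "decseq A" "(\<Inter>i. A i) = {}"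
    have "(\<lambda>i. Lam (indicator (A i))) \<longlonglongrightarrow> 0"
    proof (rule LIMSEQ_I)
      fix r :: real assume r: "0 < r"
      obtain N where N: "\<And>n. n \<ge> N \<Longrightarrow> norm ((1 - eps) ^ n * 1 - 0) < r / 2"
        using delta_lim[of 1, THEN LIMSEQ_D, of "r/2"] r by auto
      interpret MN: prob_space "muN N" by (rule mu_prob)
      have "(\<lambda>i. measure (muN N) (A i)) \<longlonglongrightarrow> measure (muN N) (\<Inter>i. A i)"
        by (rule MN.finite_Lim_measure_decseq) (use A(1,2) mu_sets in auto)
      then have "(\<lambda>i. measure (muN N) (A i)) \<longlonglongrightarrow> 0" using A(3) by simp
      then obtain i0 where i0: "\<And>i. i \<ge> i0 \<Longrightarrow> norm (measure (muN N) (A i) - 0) < r / 2"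
        using LIMSEQ_D[of _ 0 "r/2"] r by (metis half_gt_zero)
      show "\<exists>no. \<forall>i\<ge>no. norm (Lam (indicator (A i)) - 0) < r"
      proof (intro exI allI impI)
        fix i assume "i \<ge> i0"
        have Ai: "A i \<in> sets M" using A(1) by auto
        have "Lam (indicator (A i)) \<le> measure (muN N) (A i) + (1 - eps) ^ N"
          by (rule Lam_ind_mu[OF Ai])
        moreover have "measure (muN N) (A i) < r / 2" using i0[OF \<open>i \<ge> i0\<close>] by simp
        moreover have "(1 - eps) ^ N < r / 2" using N[of N] eps by simp
        moreover have "0 \<le> Lam (indicator (A i))" by (rule Lam_ind_nonneg[OF Ai])
        ultimately show "norm (Lam (indicator (A i)) - 0) < r" by simp
      qed
    qed
    then have "(\<lambda>i. ennreal (Lam (indicator (A i)))) \<longlonglongrightarrow> ennreal 0"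
      by (rule tendsto_ennrealI)
    then show "(\<lambda>i. ennreal (Lam (indicator (A i)))) \<longlonglongrightarrow> 0" by simp
  qed
  show ?thesis unfolding nuL_def by (rule emeasure_measure_of_sigma[OF sa pos ca assms])
qed

lemma nu_measure: "A \<in> sets M \<Longrightarrow> measure nuL A = Lam (indicator A)"
  using nu_emeasure Lam_ind_nonneg by (simp add: measure_def)

lemma nu_prob: "prob_space nuL"
proof
  have "UNIV \<in> sets M" using sets.top[of M] spM by simp
  then have "emeasure nuL UNIV = ennreal (Lam (indicator UNIV))" by (rule nu_emeasure)
  also have "indicator UNIV = (\<lambda>x. 1 :: real)" by (rule ext) simp
  finally show "emeasure nuL (space nuL) = 1" using Lam_const[of 1] nu_space by simp
qed

lemma nu_intg: "bnd g B \<Longrightarrow> integrable nuL g"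
proof -
  assume b: "bnd g B"
  interpret prob_space nuL by (rule nu_prob)
  show ?thesis using b unfolding bnd_def
    by (intro integrable_const_bound[where B=B]) (auto simp: measurable_cong_sets[OF nu_sets refl])
qed

end

context doeblin begin

lemma K_emeas: "emeasure (K x) A = ennreal (measure (K x) A)"
proof -
  interpret prob_space "K x" by (rule K_prob)
  show ?thesis by (rule emeasure_eq_measure)
qed

lemma nu_int: assumes b: "bnd g B" shows "(\<integral>y. g y \<partial>nuL) = Lam g"
proof -
  note g = bndD[OF b]
  have gm[measurable]: "g \<in> borel_measurable M" by (rule g(1))
  interpret NU: prob_space nuL by (rule nu_prob)
  have key: "\<bar>(\<integral>y. g y \<partial>nuL) - Lam g\<bar> \<le> 1 / real k" if k: "k > 0" for k :: nat
  proof -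
    define kr where "kr = real k"
    have kr: "kr > 0" using k kr_def by simp
    define s where "s x = real_of_int \<lfloor>g x * kr\<rfloor> / kr" for x
    define N where "N = \<lceil>B * kr\<rceil> + 1"
    define S where "S j = {x \<in> space M. real_of_int j \<le> g x * kr \<and> g x * kr < real_of_int j + 1}" for j :: int
    have Sm: "S j \<in> sets M" for j unfolding S_def by measurable
    have Sx: "x \<in> S j \<longleftrightarrow> \<lfloor>g x * kr\<rfloor> = j" for x j unfolding S_def spM floor_eq_iff by simp
    have fl: "\<lfloor>g x * kr\<rfloor> \<in> {-N..N}" for x
    proof -
      have h1: "g x * kr \<le> B * kr" using mult_right_mono[OF g(3)[of x], of kr] kr by simp
      have h2: "-B * kr \<le> g x * kr" using mult_right_mono[OF g(2)[of x], of kr] kr by simp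
      have h3: "B * kr \<le> of_int \<lceil>B * kr\<rceil>" by (rule le_of_int_ceiling)
      have h4: "of_int \<lfloor>g x * kr\<rfloor> \<le> g x * kr" by (rule of_int_floor_le)
      have h5: "g x * kr < real_of_int \<lfloor>g x * kr\<rfloor> + 1" by (rule real_of_int_floor_add_one_gt)
      have "real_of_int \<lfloor>g x * kr\<rfloor> \<le> real_of_int N"
        unfolding N_def of_int_add of_int_1 using h1 h3 h4 by linarith
      moreover have "real_of_int (-N) \<le> real_of_int \<lfloor>g x * kr\<rfloor>"
        unfolding N_def of_int_minus of_int_add of_int_1 using h2 h3 h5 by linarith
      ultimately show ?thesis unfolding atLeastAtMost_iff of_int_le_iff by blast
    qed
    have s_sum: "s x = (\<Sum>j\<in>{-N..N}. real_of_int j / kr * indicator (S j) x)" for x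
    proof -
      have "(\<Sum>j\<in>{-N..N}. real_of_int j / kr * indicator (S j) x) =
            (\<Sum>j\<in>{-N..N}. if j = \<lfloor>g x * kr\<rfloor> then real_of_int j / kr else 0)"
        by (rule sum.cong) (auto simp: Sx indicator_def)
      also have "\<dots> = real_of_int \<lfloor>g x * kr\<rfloor> / kr"
        using fl[of x] by (simp add: sum.delta[OF finite_atLeastAtMost_int])
      finally show ?thesis unfolding s_def by simp
    qed
    have s_fun: "s = (\<lambda>x. \<Sum>j\<in>{-N..N}. real_of_int j / kr * indicator (S j) x)"
      by (rule ext) (rule s_sum)
    have bS: "bnd (\<lambda>x. real_of_int j / kr * indicator (S j) x) (\<bar>real_of_int j / kr\<bar> * 1)" for j
      by (rule bnd_cmult[OF bnd_ind[OF Sm]])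
    have bs: "bnd s (\<Sum>j\<in>{-N..N}. \<bar>real_of_int j / kr\<bar> * 1)"
      unfolding s_fun
      apply (rule bnd_sum[of "{-N..N}" "\<lambda>j x. real_of_int j / kr * indicator (S j) x" "\<lambda>j. \<bar>real_of_int j / kr\<bar> * 1"])
       apply simp
      apply (rule bS)
      done
    have Ls: "Lam s = (\<Sum>j\<in>{-N..N}. real_of_int j / kr * Lam (indicator (S j)))"
    proof -
      have "Lam s = (\<Sum>j\<in>{-N..N}. Lam (\<lambda>x. real_of_int j / kr * indicator (S j) x))"
        unfolding s_fun
        apply (rule Lam_sum[of "{-N..N}" "\<lambda>j x. real_of_int j / kr * indicator (S j) x" "\<lambda>j. \<bar>real_of_int j / kr\<bar> * 1"])
         apply simp
        apply (rule bS)
        done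
      also have "\<dots> = (\<Sum>j\<in>{-N..N}. real_of_int j / kr * Lam (indicator (S j)))"
        by (rule sum.cong[OF refl]) (rule Lam_cmult[OF bnd_ind[OF Sm]])
      finally show ?thesis .
    qed
    have Is: "(\<integral>y. s y \<partial>nuL) = (\<Sum>j\<in>{-N..N}. real_of_int j / kr * Lam (indicator (S j)))"
    proof -
      have "(\<integral>y. s y \<partial>nuL) = (\<Sum>j\<in>{-N..N}. (\<integral>y. real_of_int j / kr * indicator (S j) y \<partial>nuL))"
        unfolding s_fun by (rule Bochner_Integration.integral_sum) (rule nu_intg[OF bS])
      also have "\<dots> = (\<Sum>j\<in>{-N..N}. real_of_int j / kr * Lam (indicator (S j)))"
      proof (rule sum.cong[OF refl])
        fix j
        have "(\<integral>y. real_of_int j / kr * indicator (S j) y \<partial>nuL) = real_of_int j / kr * (\<integral>y. indicator (S j) y \<partial>nuL)"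
          by (rule integral_mult_right_zero)
        also have "(\<integral>y. indicator (S j) y \<partial>nuL) = measure nuL (S j)"
          using nu_space by simp
        also have "\<dots> = Lam (indicator (S j))" by (rule nu_measure[OF Sm])
        finally show "(\<integral>y. real_of_int j / kr * indicator (S j) y \<partial>nuL) = real_of_int j / kr * Lam (indicator (S j))" .
      qed
      finally show ?thesis .
    qed
    have dlo: "0 \<le> g x - s x" and dhi: "g x - s x \<le> 1 / kr" for x
    proof -
      have h4: "of_int \<lfloor>g x * kr\<rfloor> \<le> g x * kr" by (rule of_int_floor_le)
      have h5: "g x * kr < real_of_int \<lfloor>g x * kr\<rfloor> + 1" by (rule real_of_int_floor_add_one_gt)
      have e: "g x - s x = (g x * kr - real_of_int \<lfloor>g x * kr\<rfloor>) / kr"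
        unfolding s_def using kr by (simp add: field_simps)
      have "0 \<le> g x * kr - real_of_int \<lfloor>g x * kr\<rfloor>" "g x * kr - real_of_int \<lfloor>g x * kr\<rfloor> \<le> 1"
        using h4 h5 by linarith+
      then show "0 \<le> g x - s x" "g x - s x \<le> 1 / kr"
        unfolding e using kr by (simp_all add: divide_right_mono)
    qed
    have sm: "s \<in> borel_measurable M" using bs bnd_def by auto
    have bd: "bnd (\<lambda>x. g x - s x) (1 / kr)"
    proof -
      have "\<bar>g x - s x\<bar> \<le> 1 / kr" for x using dlo[of x] dhi[of x] by simp
      moreover have "(\<lambda>x. g x - s x) \<in> borel_measurable M" using sm by measurable
      ultimately show ?thesis unfolding bnd_def by blast
    qed
    have "(\<integral>y. g y \<partial>nuL) = (\<integral>y. g y - s y \<partial>nuL) + (\<integral>y. s y \<partial>nuL)"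
      using Bochner_Integration.integral_diff[OF nu_intg[OF b] nu_intg[OF bs]] by simp
    moreover have "Lam g = Lam (\<lambda>x. g x - s x) + Lam s" using Lam_diff[OF b bs] by simp
    moreover have "0 \<le> (\<integral>y. g y - s y \<partial>nuL)" "(\<integral>y. g y - s y \<partial>nuL) \<le> 1 / kr"
      using NU.integral_ge_const[OF nu_intg[OF bd], of 0] NU.integral_le_const[OF nu_intg[OF bd], of "1/kr"]
        dlo dhi by auto
    moreover have "0 \<le> Lam (\<lambda>x. g x - s x)" "Lam (\<lambda>x. g x - s x) \<le> 1 / kr"
      using Lam_le[OF bd, of 0 "1/kr"] dlo dhi by auto
    ultimately have "\<bar>(\<integral>y. g y \<partial>nuL) - Lam g\<bar> \<le> 1 / kr" using Ls Is unfolding abs_le_iff by linarith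
    then show ?thesis unfolding kr_def .
  qed
  show ?thesis
  proof (rule ccontr)
    assume ne: "(\<integral>y. g y \<partial>nuL) \<noteq> Lam g"
    define D where "D = \<bar>(\<integral>y. g y \<partial>nuL) - Lam g\<bar>"
    have D: "D > 0" using ne D_def by simp
    obtain k :: nat where kk: "1 / D < real k" using reals_Archimedean2 by blast
    have kpos: "k > 0" using kk D by (metis divide_pos_pos not_gr0 of_nat_0 order_less_asym zero_less_one)
    have "1 / real k < D" using kk D kpos by (simp add: field_simps)
    then show False using key[OF kpos] D_def by simp
  qed
qed

lemma P_ind: assumes "A \<in> sets M" shows "P (indicator A) x = measure (K x) A"
proof -
  have "space (K x) = UNIV" using sets_eq_imp_space_eq[OF K_sets] spM by simp
  then show ?thesis unfolding P_def by simp
qed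

lemma nu_inv: assumes A: "A \<in> sets M" shows "measure nuL A = (\<integral>x. measure (K x) A \<partial>nuL)"
proof -
  have "(\<integral>x. measure (K x) A \<partial>nuL) = (\<integral>x. P (indicator A) x \<partial>nuL)" using P_ind[OF A] by simp
  also have "\<dots> = Lam (P (indicator A))" by (rule nu_int[OF bnd_P[OF bnd_ind[OF A]]])
  also have "\<dots> = Lam (indicator A)" by (rule Lam_P[OF bnd_ind[OF A]])
  also have "\<dots> = measure nuL A" using nu_measure[OF A] by simp
  finally show ?thesis by simp
qed

lemma bnd_Pn: "bnd h C \<Longrightarrow> bnd ((P ^^ n) h) C"
  by (induction n) (auto intro: bnd_P)

lemma nu_unique: assumes N: "prob_space nuL'" "sets nuL' = sets M"
  and inv: "\<forall>A\<in>sets M. measure nuL' A = (\<integral>x. measure (K x) A \<partial>nuL')"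
  shows "nuL' = nuL"
proof -
  interpret N': prob_space nuL' by (rule N(1))
  have sp': "space nuL' = UNIV" using sets_eq_imp_space_eq[OF N(2)] spM by simp
  have pa: "nuL' \<in> space (prob_algebra M)" using N by (simp add: space_prob_algebra)
  have Km: "K \<in> nuL' \<rightarrow>\<^sub>M subprob_algebra M"
    using measurable_prob_algebraD[OF K] by (simp add: measurable_cong_sets[OF N(2) refl])
  have intgb: "bnd h C \<Longrightarrow> integrable nuL' h" for h C
    unfolding bnd_def
    by (intro N'.integrable_const_bound[where B=C]) (auto simp: measurable_cong_sets[OF N(2) refl])
  have bind_eq: "nuL' \<bind> K = nuL'"
  proof (rule measure_eqI)
    show "sets (nuL' \<bind> K) = sets nuL'" using sets_bind'[OF pa K] N(2) by simp
    fix A assume "A \<in> sets (nuL' \<bind> K)"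
    then have A: "A \<in> sets M" using sets_bind'[OF pa K] by simp
    have "emeasure (nuL' \<bind> K) A = (\<integral>\<^sup>+x. emeasure (K x) A \<partial>nuL')"
      by (rule emeasure_bind_prob_algebra[OF pa K A])
    also have "\<dots> = (\<integral>\<^sup>+x. ennreal (P (indicator A) x) \<partial>nuL')"
      using P_ind[OF A] K_emeas by simp
    also have "\<dots> = ennreal (\<integral>x. P (indicator A) x \<partial>nuL')"
    proof (rule nn_integral_eq_integral)
      show "integrable nuL' (P (indicator A))" by (rule intgb[OF bnd_P[OF bnd_ind[OF A]]])
      show "AE x in nuL'. 0 \<le> P (indicator A) x" using P_ind[OF A] by simp
    qed
    also have "(\<integral>x. P (indicator A) x \<partial>nuL') = measure nuL' A"
      using inv A P_ind[OF A] by simp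
    also have "ennreal (measure nuL' A) = emeasure nuL' A" using N'.emeasure_eq_measure by simp
    finally show "emeasure (nuL' \<bind> K) A = emeasure nuL' A" .
  qed
  have intP: "(\<integral>y. h y \<partial>nuL') = (\<integral>y. P h y \<partial>nuL')" if hb: "bnd h C" for h C
  proof -
    have "(\<integral>y. h y \<partial>nuL') = (\<integral>y. h y \<partial>(nuL' \<bind> K))" using bind_eq by simp
    also have "\<dots> = (\<integral>x. (\<integral>y. h y \<partial>K x) \<partial>nuL')"
    proof (rule integral_bind[where B=C and B'=1])
      show "h \<in> borel_measurable M" using hb bnd_def by auto
      show "\<And>x. x \<in> space M \<Longrightarrow> \<bar>h x\<bar> \<le> C" using hb bnd_def by auto
      show "K \<in> measurable nuL' (subprob_algebra M)" by (rule Km)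
      show "finite_measure nuL'" by (rule N'.finite_measure_axioms)
      show "AE x in nuL'. emeasure (K x) (space (K x)) \<le> ennreal 1"
        using prob_space.emeasure_space_1[OF K_prob] by simp
    qed
    finally show ?thesis unfolding P_def .
  qed
  have intPn: "(\<integral>y. h y \<partial>nuL') = (\<integral>y. (P ^^ n) h y \<partial>nuL')" if hb: "bnd h C" for h C n
    using hb
  proof (induction n arbitrary: h)
    case 0 then show ?case by simp
  next
    case (Suc n)
    have "(\<integral>y. h y \<partial>nuL') = (\<integral>y. P h y \<partial>nuL')" by (rule intP[OF Suc.prems])
    also have "\<dots> = (\<integral>y. (P ^^ n) (P h) y \<partial>nuL')" by (rule Suc.IH[OF bnd_P[OF Suc.prems]])
    also have "(P ^^ n) (P h) = (P ^^ Suc n) h" by (simp add: funpow_Suc_right del: funpow.simps)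
    finally show ?case .
  qed
  have limeq: "(\<integral>y. h y \<partial>nuL') = Lam h" if hb: "bnd h C" for h C
  proof -
    note hh = bndD[OF hb]
    define D where "D = \<bar>(\<integral>y. h y \<partial>nuL') - Lam h\<bar>"
    have "D \<le> (1 - eps) ^ n * (C - - C)" for n
    proof -
      have bnd1: "\<bar>(P ^^ n) h y - Lam h\<bar> \<le> (1 - eps) ^ n * (C - - C)" for y
        by (rule Lam_bound(1)[OF hh])
      have i1: "integrable nuL' ((P ^^ n) h)" by (rule intgb[OF bnd_Pn[OF hb]])
      have "(\<integral>y. h y \<partial>nuL') - Lam h = (\<integral>y. (P ^^ n) h y - Lam h \<partial>nuL')"
        using intPn[OF hb, of n] Bochner_Integration.integral_diff[OF i1, of "\<lambda>_. Lam h"] N'.prob_space by simp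
      also have "\<bar>\<dots>\<bar> \<le> (\<integral>y. \<bar>(P ^^ n) h y - Lam h\<bar> \<partial>nuL')" by (rule integral_abs_bound)
      also have "\<dots> \<le> (1 - eps) ^ n * (C - - C)"
        using i1 bnd1 by (intro N'.integral_le_const) auto
      finally show ?thesis unfolding D_def .
    qed
    then have "D \<le> 0" using LIMSEQ_le_const[OF delta_lim[of "C - - C"], of D] by blast
    then show ?thesis unfolding D_def by simp
  qed
  show ?thesis
  proof (rule measure_eqI)
    show "sets nuL' = sets nuL" using N(2) nu_sets by simp
    fix A assume "A \<in> sets nuL'"
    then have A: "A \<in> sets M" using N(2) by simp
    have "measure nuL' A = Lam (indicator A)"
      using limeq[OF bnd_ind[OF A]] sp' by simp
    then have "emeasure nuL' A = ennreal (Lam (indicator A))" using N'.emeasure_eq_measure by simp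
    then show "emeasure nuL' A = emeasure nuL A" using nu_emeasure[OF A] by simp
  qed
qed

theorem doeblin_main:
  "\<exists>nuL. prob_space nuL \<and> sets nuL = sets M \<and> (\<forall>A\<in>sets M. measure nuL A = (\<integral>x. measure (K x) A \<partial>nuL))
     \<and> (\<forall>nuL'. prob_space nuL' \<and> sets nuL' = sets M \<and> (\<forall>A\<in>sets M. measure nuL' A = (\<integral>x. measure (K x) A \<partial>nuL')) \<longrightarrow> nuL' = nuL)
     \<and> (\<forall>f. f \<in> borel_measurable M \<longrightarrow> (\<forall>x. \<bar>f x\<bar> \<le> 1) \<longrightarrow>
          (\<forall>x n. \<bar>(P ^^ n) f x - (\<integral>y. f y \<partial>nuL)\<bar> \<le> 2 * (1 - eps) ^ n))"
proof (intro exI conjI allI impI ballI)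
  show "prob_space nuL" by (rule nu_prob)
  show "sets nuL = sets M" by (rule nu_sets)
  show "\<And>A. A \<in> sets M \<Longrightarrow> measure nuL A = (\<integral>x. measure (K x) A \<partial>nuL)" by (rule nu_inv)
  show "\<And>nuL'. prob_space nuL' \<and> sets nuL' = sets M \<and> (\<forall>A\<in>sets M. measure nuL' A = (\<integral>x. measure (K x) A \<partial>nuL')) \<Longrightarrow> nuL' = nuL"
    using nu_unique by blast
  fix f :: "'b \<Rightarrow> real" and x n
  assume f: "f \<in> borel_measurable M" "\<forall>x. \<bar>f x\<bar> \<le> 1"
  then have bf: "bnd f 1" unfolding bnd_def by blast
  have "\<bar>(P ^^ n) f x - Lam f\<bar> \<le> (1 - eps) ^ n * (1 - - 1)"
    by (rule Lam_bound(1)[OF bndD[OF bf]])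
  then show "\<bar>(P ^^ n) f x - (\<integral>y. f y \<partial>nuL)\<bar> \<le> 2 * (1 - eps) ^ n"
    using nu_int[OF bf] by simp
qed

end

locale conc =
  fixes mu :: "'a::{banach, second_countable_topology} measure"
    and ppi Q :: "nat \<Rightarrow> 'a \<Rightarrow> real" and l :: nat and c :: real
  assumes mu_prob: "prob_space mu" and mu_sets: "sets mu = sets borel"
    and Qint: "integrable mu (Q l)" and Qone: "(\<integral>x. Q l x \<partial>mu) = 1"
    and Qc: "continuous_on UNIV (Q l)" and Qpos: "\<And>z. Q l z > 0"
    and p0c: "continuous_on UNIV (ppi (l - 1))" and p0pos: "\<And>z. ppi (l - 1) z > 0"
    and p1c: "continuous_on UNIV (ppi l)" and p1pos: "\<And>z. ppi l z > 0"
    and cpos: "c > 0" and c0: "\<And>x. c \<le> Q l x / ppi (l - 1) x" and c1: "\<And>x. c \<le> Q l x / ppi l x"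
begin

lemma mQ[measurable]: "Q l \<in> borel_measurable borel" by (rule borel_measurable_continuous_onI[OF Qc])
lemma mp0[measurable]: "ppi (l - 1) \<in> borel_measurable borel" by (rule borel_measurable_continuous_onI[OF p0c])
lemma mp1[measurable]: "ppi l \<in> borel_measurable borel" by (rule borel_measurable_continuous_onI[OF p1c])

definition a :: "'a \<times> 'a \<Rightarrow> 'a \<Rightarrow> real" where "a th z = alpha ppi Q l (l - 1) (fst th) z"
definition b :: "'a \<times> 'a \<Rightarrow> 'a \<Rightarrow> real" where "b th z = alpha ppi Q l l (snd th) z"

definition H :: "'a \<times> 'a \<Rightarrow> 'a \<Rightarrow> ('a \<times> 'a) set \<Rightarrow> real" where
  "H th z A = min (a th z) (b th z) * indicator A (z, z) + max 0 (a th z - b th z) * indicator A (z, snd th)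
     + max 0 (b th z - a th z) * indicator A (fst th, z) + (1 - max (a th z) (b th z)) * indicator A th"

lemma alpha_bnd:
  assumes "\<And>z. ppi j z > 0" shows "0 \<le> alpha ppi Q l j t z" "alpha ppi Q l j t z \<le> 1"
proof -
  have "0 < ppi j z * Q l t / (ppi j t * Q l z)" using assms Qpos by simp
  then show "0 \<le> alpha ppi Q l j t z" "alpha ppi Q l j t z \<le> 1" unfolding alpha_def by auto
qed

lemma a_bnd: "0 \<le> a th z" "a th z \<le> 1" unfolding a_def using alpha_bnd[OF p0pos] by auto
lemma b_bnd: "0 \<le> b th z" "b th z \<le> 1" unfolding b_def using alpha_bnd[OF p1pos] by auto

lemma alpha_low:
  assumes "\<And>z. ppi j z > 0" "c \<le> Q l t / ppi j t"
  shows "min (Q l z) (c * ppi j z) \<le> Q l z * alpha ppi Q l j t z"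
proof -
  have q: "Q l z > 0" "Q l t > 0" by (rule Qpos)+
  have p: "ppi j z > 0" "ppi j t > 0" using assms(1) by auto
  have e: "Q l z * (ppi j z * Q l t / (ppi j t * Q l z)) = ppi j z * (Q l t / ppi j t)"
    using q p by (simp add: field_simps)
  have "c * ppi j z \<le> (Q l t / ppi j t) * ppi j z" by (rule mult_right_mono[OF assms(2)]) (use p in simp)
  then have "c * ppi j z \<le> ppi j z * (Q l t / ppi j t)" by (simp only: mult.commute)
  then have "min (Q l z) (c * ppi j z) \<le> min (Q l z * 1) (Q l z * (ppi j z * Q l t / (ppi j t * Q l z)))"
    unfolding e by simp
  also have "\<dots> = Q l z * alpha ppi Q l j t z" unfolding alpha_def using q by (simp add: min_mult_distrib_left)
  finally show ?thesis .
qed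

lemma H_nonneg: "0 \<le> H th z A"
  unfolding H_def using a_bnd[of th z] b_bnd[of th z] by (intro add_nonneg_nonneg mult_nonneg_nonneg) auto

lemma H_UNIV: "H th z UNIV = 1"
  unfolding H_def by (simp add: min_def max_def)

lemma H_le1: "H th z A \<le> 1"
proof -
  have "H th z A \<le> H th z UNIV" unfolding H_def
    using a_bnd[of th z] b_bnd[of th z]
    by (intro add_mono mult_left_mono) (auto simp: indicator_def)
  then show ?thesis using H_UNIV by simp
qed

lemma a_meas: "(\<lambda>x. a (fst x) (snd x)) \<in> borel_measurable ((borel \<Otimes>\<^sub>M borel) \<Otimes>\<^sub>M borel)"
  unfolding a_def alpha_def by measurable

lemma b_meas: "(\<lambda>x. b (fst x) (snd x)) \<in> borel_measurable ((borel \<Otimes>\<^sub>M borel) \<Otimes>\<^sub>M borel)"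
  unfolding b_def alpha_def by measurable

lemma H_meas: assumes A: "A \<in> sets (borel \<Otimes>\<^sub>M borel)"
  shows "(\<lambda>x. H (fst x) (snd x) A) \<in> borel_measurable ((borel \<Otimes>\<^sub>M borel) \<Otimes>\<^sub>M borel)"
  unfolding H_def using a_meas b_meas A by measurable

end

context conc begin

declare mQ[measurable] mp0[measurable] mp1[measurable]

abbreviation "jk \<equiv> joint_kernel mu ppi Q l"
abbreviation "JK \<equiv> joint_kernel_measure mu ppi Q l"

lemma mz: "f \<in> borel_measurable borel \<Longrightarrow> f \<in> borel_measurable mu"
  using measurable_cong_sets[OF mu_sets refl] by blast

lemma borel_pair_sets: "A \<in> sets (borel :: ('a \<times> 'a) measure) \<Longrightarrow> A \<in> sets (borel \<Otimes>\<^sub>M (borel :: 'a measure))"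
  using borel_prod[where 'a='a and 'b='a] by metis

lemma abs_ind_le: "0 \<le> x \<Longrightarrow> x \<le> 1 \<Longrightarrow> \<bar>x * indicator S p\<bar> \<le> (1::real)"
  by (simp add: indicator_def)

lemma a_mz[measurable]: "(\<lambda>z. a th z) \<in> borel_measurable borel" unfolding a_def alpha_def by measurable
lemma b_mz[measurable]: "(\<lambda>z. b th z) \<in> borel_measurable borel" unfolding b_def alpha_def by measurable

lemma H_mz: assumes "A \<in> sets (borel :: ('a \<times> 'a) measure)" shows "(\<lambda>z. H th z A) \<in> borel_measurable borel"
  using borel_pair_sets[OF assms] unfolding H_def by measurable

lemma intQ: assumes "f \<in> borel_measurable borel" "\<And>z. \<bar>f z\<bar> \<le> 1"
  shows "integrable mu (\<lambda>z. f z * Q l z)"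
proof (rule Bochner_Integration.integrable_bound[OF Qint])
  show "(\<lambda>z. f z * Q l z) \<in> borel_measurable mu" by (intro mz borel_measurable_times assms(1) mQ)
  show "AE x in mu. norm (f x * Q l x) \<le> norm (Q l x)"
  proof (rule AE_I2)
    fix x
    have "\<bar>f x\<bar> * \<bar>Q l x\<bar> \<le> 1 * \<bar>Q l x\<bar>" by (rule mult_right_mono[OF assms(2)]) simp
    then show "norm (f x * Q l x) \<le> norm (Q l x)" by (simp add: abs_mult)
  qed
qed

lemma jk_eq: assumes A: "A \<in> sets borel" shows "jk th A = (\<integral>z. Q l z * H th z A \<partial>mu)"
proof -
  note Ap = borel_pair_sets[OF A]
  define t1 where "t1 z = min (a th z) (b th z) * indicator A (z, z) * Q l z" for z
  define t2 where "t2 z = max 0 (a th z - b th z) * indicator A (z, snd th) * Q l z" for z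
  define t3 where "t3 z = max 0 (b th z - a th z) * indicator A (fst th, z) * Q l z" for z
  define t4 where "t4 z = indicator A th * (Q l z - max (a th z) (b th z) * Q l z)" for z
  have ab: "0 \<le> a th z" "a th z \<le> 1" "0 \<le> b th z" "b th z \<le> 1" for z using a_bnd b_bnd by auto
  have i1: "integrable mu t1" unfolding t1_def
  proof (rule intQ)
    show "(\<lambda>z. min (a th z) (b th z) * indicator A (z, z)) \<in> borel_measurable borel" using Ap by measurable
    show "\<bar>min (a th z) (b th z) * indicator A (z, z)\<bar> \<le> 1" for z
      by (rule abs_ind_le) (use ab[of z] in auto)
  qed
  have i2: "integrable mu t2" unfolding t2_def
  proof (rule intQ)
    show "(\<lambda>z. max 0 (a th z - b th z) * indicator A (z, snd th)) \<in> borel_measurable borel" using Ap by measurable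
    show "\<bar>max 0 (a th z - b th z) * indicator A (z, snd th)\<bar> \<le> 1" for z
      by (rule abs_ind_le) (use ab[of z] in auto)
  qed
  have i3: "integrable mu t3" unfolding t3_def
  proof (rule intQ)
    show "(\<lambda>z. max 0 (b th z - a th z) * indicator A (fst th, z)) \<in> borel_measurable borel" using Ap by measurable
    show "\<bar>max 0 (b th z - a th z) * indicator A (fst th, z)\<bar> \<le> 1" for z
      by (rule abs_ind_le) (use ab[of z] in auto)
  qed
  have imax: "integrable mu (\<lambda>z. max (a th z) (b th z) * Q l z)"
  proof (rule intQ)
    show "(\<lambda>z. max (a th z) (b th z)) \<in> borel_measurable borel" by measurable
    show "\<bar>max (a th z) (b th z)\<bar> \<le> 1" for z using ab[of z] by auto
  qed
  have i4': "integrable mu (\<lambda>z. Q l z - max (a th z) (b th z) * Q l z)"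
    using Qint imax by (rule Bochner_Integration.integrable_diff)
  have i4: "integrable mu t4" unfolding t4_def using i4' by (rule integrable_mult_right)
  have I4: "(\<integral>z. t4 z \<partial>mu) = indicator A th * (1 - (\<integral>z. max (a th z) (b th z) * Q l z \<partial>mu))"
    unfolding t4_def using Bochner_Integration.integral_diff[OF Qint imax] Qone by simp
  have pw: "Q l z * H th z A = t1 z + t2 z + t3 z + t4 z" for z
    unfolding t1_def t2_def t3_def t4_def H_def by (simp add: algebra_simps)
  have "(\<integral>z. Q l z * H th z A \<partial>mu) = (\<integral>z. t1 z + t2 z + t3 z + t4 z \<partial>mu)"
    unfolding pw ..
  also have "\<dots> = (\<integral>z. t1 z \<partial>mu) + (\<integral>z. t2 z \<partial>mu) + (\<integral>z. t3 z \<partial>mu) + (\<integral>z. t4 z \<partial>mu)"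
    using i1 i2 i3 i4 by (simp add: Bochner_Integration.integral_add)
  also have "\<dots> = jk th A"
    unfolding I4 unfolding t1_def t2_def t3_def joint_kernel_def a_def b_def by (simp add: mult.commute)
  finally show ?thesis by simp
qed

lemma QH_int: "A \<in> sets borel \<Longrightarrow> integrable mu (\<lambda>z. Q l z * H th z A)"
proof -
  assume A: "A \<in> sets borel"
  have "integrable mu (\<lambda>z. H th z A * Q l z)"
  proof (rule intQ[OF H_mz[OF A]])
    show "\<bar>H th z A\<bar> \<le> 1" for z using H_nonneg[of th z A] H_le1[of th z A] by simp
  qed
  then show ?thesis by (simp add: mult.commute)
qed

lemma QH_nonneg: "0 \<le> Q l z * H th z A" using Qpos[of z] H_nonneg by simp

lemma jk_nonneg: "A \<in> sets borel \<Longrightarrow> 0 \<le> jk th A"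
  using jk_eq QH_nonneg by (simp add: integral_nonneg)

lemma jk_nn: assumes A: "A \<in> sets borel"
  shows "ennreal (jk th A) = (\<integral>\<^sup>+z. ennreal (Q l z * H th z A) \<partial>mu)"
  unfolding jk_eq[OF A] using QH_int[OF A] QH_nonneg
  by (intro nn_integral_eq_integral[symmetric]) auto

lemma H_split: "ennreal (Q l z * H th z A) =
   ennreal (Q l z * min (a th z) (b th z)) * indicator A (z, z)
 + ennreal (Q l z * max 0 (a th z - b th z)) * indicator A (z, snd th)
 + ennreal (Q l z * max 0 (b th z - a th z)) * indicator A (fst th, z)
 + ennreal (Q l z * (1 - max (a th z) (b th z))) * indicator A th"
proof -
  have q: "0 \<le> Q l z" using Qpos[of z] by simp
  have ab: "0 \<le> a th z" "a th z \<le> 1" "0 \<le> b th z" "b th z \<le> 1" using a_bnd b_bnd by auto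
  define c1 where "c1 = Q l z * min (a th z) (b th z)"
  define c2 where "c2 = Q l z * max 0 (a th z - b th z)"
  define c3 where "c3 = Q l z * max 0 (b th z - a th z)"
  define c4 where "c4 = Q l z * (1 - max (a th z) (b th z))"
  have cn: "0 \<le> c1" "0 \<le> c2" "0 \<le> c3" "0 \<le> c4" unfolding c1_def c2_def c3_def c4_def using q ab by auto
  have e: "Q l z * H th z A = c1 * indicator A (z, z) + c2 * indicator A (z, snd th) + c3 * indicator A (fst th, z) + c4 * indicator A th"
    unfolding c1_def c2_def c3_def c4_def H_def by (simp add: algebra_simps)
  have n: "0 \<le> (indicator X x :: real)" for X x by (simp add: indicator_def)
  show ?thesis unfolding e c1_def[symmetric] c2_def[symmetric] c3_def[symmetric] c4_def[symmetric]
    using cn n by (simp add: ennreal_plus ennreal_mult ennreal_indicator add_nonneg_nonneg)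
qed

lemma H_suminf: assumes F: "disjoint_family F"
  shows "(\<Sum>i. ennreal (Q l z * H th z (F i))) = ennreal (Q l z * H th z (\<Union>i. F i))"
proof -
  define e1 where "e1 = ennreal (Q l z * min (a th z) (b th z))"
  define e2 where "e2 = ennreal (Q l z * max 0 (a th z - b th z))"
  define e3 where "e3 = ennreal (Q l z * max 0 (b th z - a th z))"
  define e4 where "e4 = ennreal (Q l z * (1 - max (a th z) (b th z)))"
  have s: "\<And>p. (\<Sum>i. indicator (F i) p :: ennreal) = indicator (\<Union>i. F i) p" by (rule suminf_indicator[OF F])
  have "(\<Sum>i. ennreal (Q l z * H th z (F i))) =
        (\<Sum>i. e1 * indicator (F i) (z, z) + e2 * indicator (F i) (z, snd th) + e3 * indicator (F i) (fst th, z) + e4 * indicator (F i) th)"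
    unfolding H_split e1_def e2_def e3_def e4_def ..
  also have "\<dots> = (\<Sum>i. e1 * indicator (F i) (z, z) + e2 * indicator (F i) (z, snd th) + e3 * indicator (F i) (fst th, z)) + (\<Sum>i. e4 * indicator (F i) th)"
    by (rule suminf_add[OF summableI summableI, symmetric])
  also have "(\<Sum>i. e1 * indicator (F i) (z, z) + e2 * indicator (F i) (z, snd th) + e3 * indicator (F i) (fst th, z)) =
        (\<Sum>i. e1 * indicator (F i) (z, z) + e2 * indicator (F i) (z, snd th)) + (\<Sum>i. e3 * indicator (F i) (fst th, z))"
    by (rule suminf_add[OF summableI summableI, symmetric])
  also have "(\<Sum>i. e1 * indicator (F i) (z, z) + e2 * indicator (F i) (z, snd th)) =
        (\<Sum>i. e1 * indicator (F i) (z, z)) + (\<Sum>i. e2 * indicator (F i) (z, snd th))"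
    by (rule suminf_add[OF summableI summableI, symmetric])
  also have "(\<Sum>i. e1 * indicator (F i) (z, z)) + (\<Sum>i. e2 * indicator (F i) (z, snd th)) + (\<Sum>i. e3 * indicator (F i) (fst th, z)) + (\<Sum>i. e4 * indicator (F i) th)
     = e1 * indicator (\<Union>i. F i) (z, z) + e2 * indicator (\<Union>i. F i) (z, snd th) + e3 * indicator (\<Union>i. F i) (fst th, z) + e4 * indicator (\<Union>i. F i) th"
    unfolding ennreal_suminf_cmult s ..
  also have "\<dots> = ennreal (Q l z * H th z (\<Union>i. F i))"
    unfolding H_split e1_def e2_def e3_def e4_def ..
  finally show ?thesis .
qed

lemma sa_borel: "sigma_algebra UNIV (sets (borel :: ('a \<times> 'a) measure))"
  using sets.sigma_algebra_axioms[of "borel :: ('a \<times> 'a) measure"] by simp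

lemma JK_emeasure: assumes A: "A \<in> sets borel" shows "emeasure (JK th) A = ennreal (jk th A)"
proof -
  have pos: "positive (sets borel) (\<lambda>A. ennreal (jk th A))"
  proof -
    have "H th z {} = 0" for z unfolding H_def by simp
    then have "jk th {} = 0" using jk_eq[of "{}" th] by simp
    then show ?thesis unfolding positive_def by simp
  qed
  have ca: "countably_additive (sets borel) (\<lambda>A. ennreal (jk th A))"
    unfolding countably_additive_def
  proof (intro allI impI)
    fix F :: "nat \<Rightarrow> ('a \<times> 'a) set"
    assume F: "range F \<subseteq> sets borel" "disjoint_family F" "(\<Union>i. F i) \<in> sets borel"
    have Fi: "F i \<in> sets borel" for i using F(1) by auto
    have "(\<Sum>i. ennreal (jk th (F i))) = (\<Sum>i. \<integral>\<^sup>+z. ennreal (Q l z * H th z (F i)) \<partial>mu)"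
      using jk_nn[OF Fi] by simp
    also have "\<dots> = (\<integral>\<^sup>+z. (\<Sum>i. ennreal (Q l z * H th z (F i))) \<partial>mu)"
    proof (rule nn_integral_suminf[symmetric])
      fix i show "(\<lambda>z. ennreal (Q l z * H th z (F i))) \<in> borel_measurable mu"
        using H_mz[OF Fi] by (intro mz) measurable
    qed
    also have "\<dots> = (\<integral>\<^sup>+z. ennreal (Q l z * H th z (\<Union>i. F i)) \<partial>mu)"
      using H_suminf[OF F(2)] by simp
    also have "\<dots> = ennreal (jk th (\<Union>i. F i))" using jk_nn[OF F(3)] by simp
    finally show "(\<Sum>i. ennreal (jk th (F i))) = ennreal (jk th (\<Union>i. F i))" .
  qed
  show ?thesis unfolding joint_kernel_measure_def by (rule emeasure_measure_of_sigma[OF sa_borel pos ca A])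
qed

lemma JK_sets: "sets (JK th) = sets borel"
  unfolding joint_kernel_measure_def using sigma_algebra.sets_measure_of_eq[OF sa_borel] by blast

lemma JK_space: "space (JK th) = UNIV"
  unfolding joint_kernel_measure_def using sigma_algebra.space_measure_of_eq[OF sa_borel] by blast

lemma JK_prob: "prob_space (JK th)"
proof
  have "jk th UNIV = 1"
    using jk_eq[of UNIV th] H_UNIV Qone by simp
  then show "emeasure (JK th) (space (JK th)) = 1" using JK_emeasure[of UNIV th] JK_space by simp
qed

lemma JK_measure: "A \<in> sets borel \<Longrightarrow> measure (JK th) A = jk th A"
  using JK_emeasure jk_nonneg by (simp add: measure_def)

lemma JK_meas: "JK \<in> borel \<rightarrow>\<^sub>M prob_algebra borel"
proof (rule measurable_prob_algebraI)
  show "\<And>x. x \<in> space borel \<Longrightarrow> prob_space (JK x)" by (rule JK_prob)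
  show "JK \<in> borel \<rightarrow>\<^sub>M subprob_algebra borel"
  proof (rule measurable_subprob_algebra)
    show "\<And>x. x \<in> space borel \<Longrightarrow> subprob_space (JK x)" using JK_prob prob_space_imp_subprob_space by blast
    show "\<And>x. x \<in> space borel \<Longrightarrow> sets (JK x) = sets borel" by (rule JK_sets)
    fix A :: "('a \<times> 'a) set" assume A: "A \<in> sets borel"
    interpret MU: prob_space mu by (rule mu_prob)
    have jm: "(\<lambda>(th, z). Q l z * H th z A) \<in> borel_measurable ((borel :: ('a \<times> 'a) measure) \<Otimes>\<^sub>M mu)"
    proof -
      have m1: "(\<lambda>x. Q l (snd x) * H (fst x) (snd x) A) \<in> borel_measurable ((borel \<Otimes>\<^sub>M borel) \<Otimes>\<^sub>M borel)"
        using H_meas[OF borel_pair_sets[OF A]] by measurable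
      have bp: "(borel \<Otimes>\<^sub>M borel :: ('a \<times> 'a) measure) = borel" by (rule borel_prod)
      have m2: "(\<lambda>x. Q l (snd x) * H (fst x) (snd x) A) \<in> borel_measurable ((borel :: ('a \<times> 'a) measure) \<Otimes>\<^sub>M borel)"
        using m1 unfolding bp .
      have se: "sets ((borel :: ('a \<times> 'a) measure) \<Otimes>\<^sub>M mu) = sets ((borel :: ('a \<times> 'a) measure) \<Otimes>\<^sub>M borel)"
        by (rule sets_pair_measure_cong[OF refl mu_sets])
      have eq: "(\<lambda>(th, z). Q l z * H th z A) = (\<lambda>x. Q l (snd x) * H (fst x) (snd x) A)"
        by (rule ext) (simp add: case_prod_beta)
      show ?thesis unfolding eq measurable_cong_sets[OF se refl] by (rule m2)
    qed
    have "(\<lambda>th. \<integral>z. Q l z * H th z A \<partial>mu) \<in> borel_measurable borel"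
      using MU.borel_measurable_lebesgue_integral[OF jm] by simp
    then have "(\<lambda>th. jk th A) \<in> borel_measurable borel" using jk_eq[OF A] by simp
    then show "(\<lambda>th. emeasure (JK th) A) \<in> borel_measurable borel"
      using JK_emeasure[OF A] by simp
  qed
qed

end

context conc begin

declare mQ[measurable] mp0[measurable] mp1[measurable]

definition m :: "'a \<Rightarrow> real" where "m z = min (Q l z) (min (c * ppi (l - 1) z) (c * ppi l z)) / 2"

lemma m_pos: "0 < m z" unfolding m_def using Qpos[of z] p0pos[of z] p1pos[of z] cpos by simp
lemma m_le: "m z \<le> Q l z / 2" unfolding m_def by simp
lemma m_meas: "m \<in> borel_measurable borel"
proof -
  have "(\<lambda>z. min (Q l z) (min (c * ppi (l - 1) z) (c * ppi l z)) / 2) \<in> borel_measurable borel"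
    using mQ mp0 mp1 by measurable
  then show ?thesis unfolding m_def[abs_def] .
qed

lemma m_int: "integrable mu m"
proof (rule Bochner_Integration.integrable_bound[OF Qint])
  show "m \<in> borel_measurable mu" by (rule mz[OF m_meas])
  show "AE x in mu. norm (m x) \<le> norm (Q l x)"
  proof (rule AE_I2)
    fix x
    have "0 < m x" "m x \<le> Q l x / 2" "0 < Q l x" using m_pos m_le Qpos by auto
    then show "norm (m x) \<le> norm (Q l x)" by simp
  qed
qed

definition Em :: "('a \<times> 'a) measure" where
  "Em = distr (density mu (\<lambda>z. ennreal (m z))) borel (\<lambda>z. (z, z))"

lemma diag_meas: "(\<lambda>z::'a. (z, z)) \<in> borel \<rightarrow>\<^sub>M (borel :: ('a \<times> 'a) measure)"
proof -
  have "(\<lambda>z::'a. (z, z)) \<in> borel \<rightarrow>\<^sub>M (borel \<Otimes>\<^sub>M borel)" by measurable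
  moreover have "(borel \<Otimes>\<^sub>M borel :: ('a \<times> 'a) measure) = borel" by (rule borel_prod)
  ultimately show ?thesis by simp
qed

lemma Em_sets: "sets Em = sets borel" unfolding Em_def by simp

lemma Em_space: "space Em = UNIV" unfolding Em_def by simp

lemma mu_space: "space mu = UNIV" using sets_eq_imp_space_eq[OF mu_sets] by simp

lemma Em_emeasure: assumes A: "A \<in> sets borel"
  shows "emeasure Em A = (\<integral>\<^sup>+z. ennreal (m z) * indicator A (z, z) \<partial>mu)"
proof -
  have sd: "sets (density mu (\<lambda>z. ennreal (m z))) = sets borel" using mu_sets by simp
  have dm: "(\<lambda>z::'a. (z, z)) \<in> density mu (\<lambda>z. ennreal (m z)) \<rightarrow>\<^sub>M (borel :: ('a \<times> 'a) measure)"
    using diag_meas unfolding measurable_cong_sets[OF sd refl] .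
  have dmu: "(\<lambda>z::'a. (z, z)) \<in> mu \<rightarrow>\<^sub>M (borel :: ('a \<times> 'a) measure)"
    using diag_meas unfolding measurable_cong_sets[OF mu_sets refl] .
  have sp: "space (density mu (\<lambda>z. ennreal (m z))) = UNIV" using mu_space by simp
  have pre: "(\<lambda>z. (z, z)) -` A \<inter> UNIV \<in> sets mu"
    using measurable_sets[OF dmu A] mu_space by simp
  have mm: "(\<lambda>z. ennreal (m z)) \<in> borel_measurable mu" using mz[OF m_meas] by measurable
  have "emeasure Em A = emeasure (density mu (\<lambda>z. ennreal (m z))) ((\<lambda>z. (z, z)) -` A \<inter> UNIV)"
    unfolding Em_def using emeasure_distr[OF dm A] sp by simp
  also have "\<dots> = (\<integral>\<^sup>+z. ennreal (m z) * indicator ((\<lambda>z. (z, z)) -` A \<inter> UNIV) z \<partial>mu)"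
    by (rule emeasure_density[OF mm pre])
  also have "\<dots> = (\<integral>\<^sup>+z. ennreal (m z) * indicator A (z, z) \<partial>mu)"
    by (simp add: indicator_def)
  finally show ?thesis .
qed

lemma m_le_QH: "m z * indicator A (z, z) \<le> Q l z * H th z A"
proof -
  have q: "0 < Q l z" by (rule Qpos)
  have la: "min (Q l z) (c * ppi (l - 1) z) \<le> Q l z * a th z"
    unfolding a_def by (rule alpha_low[OF p0pos c0])
  have lb: "min (Q l z) (c * ppi l z) \<le> Q l z * b th z"
    unfolding b_def by (rule alpha_low[OF p1pos c1])
  have "2 * m z \<le> min (Q l z * a th z) (Q l z * b th z)"
    using la lb unfolding m_def by (auto simp: min_def split: if_split_asm)
  also have "\<dots> = Q l z * min (a th z) (b th z)" using q by (simp add: min_mult_distrib_left)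
  finally have k: "m z \<le> Q l z * min (a th z) (b th z)" using m_pos[of z] by simp
  have ab: "0 \<le> a th z" "a th z \<le> 1" "0 \<le> b th z" "b th z \<le> 1" using a_bnd b_bnd by auto
  have rest: "0 \<le> Q l z * (max 0 (a th z - b th z) * indicator A (z, snd th)
     + max 0 (b th z - a th z) * indicator A (fst th, z) + (1 - max (a th z) (b th z)) * indicator A th)"
    using q ab by (intro mult_nonneg_nonneg add_nonneg_nonneg) (auto simp: indicator_def)
  have "Q l z * H th z A = Q l z * min (a th z) (b th z) * indicator A (z, z) + Q l z * (max 0 (a th z - b th z) * indicator A (z, snd th)
     + max 0 (b th z - a th z) * indicator A (fst th, z) + (1 - max (a th z) (b th z)) * indicator A th)"
    unfolding H_def by (simp add: algebra_simps)
  moreover have "m z * indicator A (z, z) \<le> Q l z * min (a th z) (b th z) * indicator A (z, z)"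
    using k by (simp add: indicator_def)
  ultimately show ?thesis using rest by linarith
qed

lemma Em_le: "emeasure Em A \<le> emeasure (JK th) A"
proof (cases "A \<in> sets borel")
  case True
  have "emeasure Em A = (\<integral>\<^sup>+z. ennreal (m z) * indicator A (z, z) \<partial>mu)" by (rule Em_emeasure[OF True])
  also have "\<dots> \<le> (\<integral>\<^sup>+z. ennreal (Q l z * H th z A) \<partial>mu)"
  proof (rule nn_integral_mono)
    fix z
    have "ennreal (m z) * indicator A (z, z) = ennreal (m z * indicator A (z, z))"
      using m_pos[of z] by (simp add: ennreal_mult ennreal_indicator)
    also have "\<dots> \<le> ennreal (Q l z * H th z A)" by (rule ennreal_leI[OF m_le_QH])
    finally show "ennreal (m z) * indicator A (z, z) \<le> ennreal (Q l z * H th z A)" .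
  qed
  also have "\<dots> = ennreal (jk th A)" using jk_nn[OF True] by simp
  also have "\<dots> = emeasure (JK th) A" using JK_emeasure[OF True] by simp
  finally show ?thesis .
next
  case False
  then have "A \<notin> sets Em" using Em_sets by simp
  then show ?thesis by (simp add: emeasure_notin_sets)
qed

lemma Em_UNIV: "emeasure Em UNIV = ennreal (\<integral>z. m z \<partial>mu)"
proof -
  have "emeasure Em UNIV = (\<integral>\<^sup>+z. ennreal (m z) \<partial>mu)" using Em_emeasure[of UNIV] by simp
  also have "\<dots> = ennreal (\<integral>z. m z \<partial>mu)"
    using m_int m_pos by (intro nn_integral_eq_integral) (auto intro: less_imp_le)
  finally show ?thesis .
qed

lemma Em_measure: "measure Em UNIV = (\<integral>z. m z \<partial>mu)"
proof -
  have "0 \<le> (\<integral>z. m z \<partial>mu)" using m_pos by (simp add: integral_nonneg less_imp_le)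
  then show ?thesis using Em_UNIV by (simp add: measure_def)
qed

lemma int_m_pos: "0 < (\<integral>z. m z \<partial>mu)"
proof -
  interpret MU: prob_space mu by (rule mu_prob)
  have nn: "0 \<le> (\<integral>z. m z \<partial>mu)" using m_pos by (simp add: integral_nonneg less_imp_le)
  have "(\<integral>z. m z \<partial>mu) \<noteq> 0"
  proof
    assume "(\<integral>z. m z \<partial>mu) = 0"
    moreover have nn2: "AE z in mu. 0 \<le> m z" using m_pos by (intro AE_I2) (simp add: less_imp_le)
    ultimately have ae: "AE z in mu. m z = 0"
      using integral_nonneg_eq_0_iff_AE[OF m_int nn2] by blast
    have "AE z in mu. False" using ae
    proof eventually_elim
      fix z assume "m z = 0" then show False using m_pos[of z] by simp
    qed
    then show False using MU.AE_False by simp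
  qed
  then show ?thesis using nn by simp
qed

lemma int_m_le: "(\<integral>z. m z \<partial>mu) \<le> 1 / 2"
proof -
  have "(\<integral>z. m z \<partial>mu) \<le> (\<integral>z. Q l z / 2 \<partial>mu)"
    using m_int Qint m_le by (intro integral_mono) auto
  also have "\<dots> = 1 / 2" using Qone by simp
  finally show ?thesis .
qed

lemma Em_fin: "finite_measure Em" by (rule finite_measureI) (simp add: Em_space Em_UNIV)
lemma Em_eps1: "0 < measure Em UNIV" using Em_measure int_m_pos by simp
lemma Em_eps2: "measure Em UNIV < 1" using Em_measure int_m_le by simp
lemma sp_borel: "space (borel :: ('a \<times> 'a) measure) = UNIV" by simp

lemma doeblin_inst: "doeblin borel JK Em"
  unfolding doeblin_def
  apply (intro conjI allI)
  apply (rule sp_borel)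
  apply (rule JK_meas)
  apply (rule Em_fin)
  apply (rule Em_sets)
  apply (rule Em_le)
  apply (rule Em_eps1)
  apply (rule Em_eps2)
  done

end

lemma min_ratio:
  fixes g :: "'a::topological_space \<Rightarrow> real"
  assumes gc: "continuous_on UNIV g" and gp: "\<And>x. g x > 0" and comp: "\<And>cr. cr > 0 \<Longrightarrow> compact {x. g x \<le> cr}"
  shows "\<exists>c>0. \<forall>x. c \<le> g x"
proof -
  define S where "S = {x. g x \<le> g undefined}"
  have cS: "compact S" unfolding S_def by (rule comp[OF gp])
  have ne: "S \<noteq> {}" unfolding S_def by auto
  have cg: "continuous_on S g" using gc by (rule continuous_on_subset) simp
  obtain x0 where x0: "x0 \<in> S" "\<And>y. y \<in> S \<Longrightarrow> g x0 \<le> g y"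
    using continuous_attains_inf[OF cS ne cg] by blast
  have "g x0 \<le> g y" for y
  proof (cases "y \<in> S")
    case True then show ?thesis using x0(2) by blast
  next
    case False
    then have "g undefined < g y" unfolding S_def by simp
    moreover have "g x0 \<le> g undefined" using x0(2)[of undefined] unfolding S_def by simp
    ultimately show ?thesis by simp
  qed
  then show ?thesis using gp[of x0] by blast
qed

context conc begin

lemma main_conc:
  "\<exists>nu. invariant_prob mu ppi Q l nu
          \<and> (\<forall>nu'. invariant_prob mu ppi Q l nu' \<longrightarrow> nu' = nu)
          \<and> (\<exists>V Vmax r M. Vmax \<ge> 1 \<and>
                (\<forall>th. 1 \<le> V th \<and> V th \<le> Vmax) \<and> integrable nu V \<and>
                0 < r \<and> r < 1 \<and> 0 < M \<and>
                (\<forall>f :: 'a \<times> 'a \<Rightarrow> real. f \<in> borel_measurable borel \<longrightarrow> (\<forall>th. \<bar>f th\<bar> \<le> V th) \<longrightarrow>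
                   (\<forall>th n. \<bar>((markov_op mu ppi Q l ^^ n) f) th - (\<integral>eta. f eta \<partial>nu)\<bar>
                            \<le> M * Vmax * r ^ n)))"
proof -
  interpret D: doeblin borel JK Em by (rule doeblin_inst)
  obtain nu where n1: "prob_space nu" and n2: "sets nu = sets borel"
    and n3: "\<forall>A\<in>sets borel. measure nu A = (\<integral>x. measure (JK x) A \<partial>nu)"
    and n4: "\<forall>nu'. prob_space nu' \<and> sets nu' = sets borel \<and> (\<forall>A\<in>sets borel. measure nu' A = (\<integral>x. measure (JK x) A \<partial>nu')) \<longrightarrow> nu' = nu"
    and n5: "\<forall>f. f \<in> borel_measurable borel \<longrightarrow> (\<forall>x. \<bar>f x\<bar> \<le> 1) \<longrightarrow>
          (\<forall>x n. \<bar>(D.P ^^ n) f x - (\<integral>y. f y \<partial>nu)\<bar> \<le> 2 * (1 - measure Em UNIV) ^ n)"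
    using D.doeblin_main by blast
  have ieq: "(\<integral>x. measure (JK x) A \<partial>N) = (\<integral>x. jk x A \<partial>N)" if A: "A \<in> sets borel" for A N
    using JK_measure[OF A] by simp
  have inv: "invariant_prob mu ppi Q l nu"
    unfolding invariant_prob_def using n1 n2 n3 ieq by simp
  have uniq: "\<forall>nu'. invariant_prob mu ppi Q l nu' \<longrightarrow> nu' = nu"
  proof (intro allI impI)
    fix nu' assume "invariant_prob mu ppi Q l nu'"
    then have "prob_space nu'" "sets nu' = sets borel" "\<forall>A\<in>sets borel. measure nu' A = (\<integral>x. measure (JK x) A \<partial>nu')"
      unfolding invariant_prob_def using ieq by auto
    then show "nu' = nu" using n4 by blast
  qed
  have mo: "markov_op mu ppi Q l = D.P" by (intro ext) (simp add: markov_op_def D.P_def)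
  interpret NU: prob_space nu by (rule n1)
  have bnd: "\<exists>V Vmax r M. Vmax \<ge> 1 \<and>
                (\<forall>th. 1 \<le> V th \<and> V th \<le> Vmax) \<and> integrable nu V \<and>
                0 < r \<and> r < 1 \<and> 0 < M \<and>
                (\<forall>f :: 'a \<times> 'a \<Rightarrow> real. f \<in> borel_measurable borel \<longrightarrow> (\<forall>th. \<bar>f th\<bar> \<le> V th) \<longrightarrow>
                   (\<forall>th n. \<bar>((markov_op mu ppi Q l ^^ n) f) th - (\<integral>eta. f eta \<partial>nu)\<bar>
                            \<le> M * Vmax * r ^ n))"
  proof -
    define r0 where "r0 = 1 - measure Em UNIV"
    have r0a: "0 < r0" using Em_eps2 r0_def by simp
    have r0b: "r0 < 1" using Em_eps1 r0_def by simp
    have B: "\<forall>f :: 'a \<times> 'a \<Rightarrow> real. f \<in> borel_measurable borel \<longrightarrow> (\<forall>th. \<bar>f th\<bar> \<le> 1) \<longrightarrow>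
                   (\<forall>th n. \<bar>((markov_op mu ppi Q l ^^ n) f) th - (\<integral>eta. f eta \<partial>nu)\<bar> \<le> 2 * 1 * r0 ^ n)"
      using n5 unfolding mo r0_def by simp
    have I: "integrable nu (\<lambda>_. 1::real)" by simp
    show ?thesis
      apply (rule exI[of _ "\<lambda>_. 1"])
      apply (rule exI[of _ "1::real"])
      apply (rule exI[of _ r0])
      apply (rule exI[of _ "2::real"])
      using B I r0a r0b by simp
  qed
  show ?thesis using inv uniq bnd by blast
qed

end

theorem mainTheorem1:
  fixes mu :: "'a :: {banach, second_countable_topology} measure"
    and ppi Q :: "nat \<Rightarrow> 'a \<Rightarrow> real"
    and L l :: nat
  assumes prior: "prob_space mu" "sets mu = sets borel"
    and post_dens: "\<And>j. j \<le> L \<Longrightarrow> integrable mu (ppi j) \<and> (\<integral>x. ppi j x \<partial>mu) = 1"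
    and prop_dens: "\<And>k. 1 \<le> k \<Longrightarrow> k \<le> L \<Longrightarrow> integrable mu (Q k) \<and> (\<integral>x. Q k x \<partial>mu) = 1"
    and A11: "\<And>k. 1 \<le> k \<Longrightarrow> k \<le> L \<Longrightarrow> continuous_on UNIV (Q k) \<and> (\<forall>z. Q k z > 0)"
    and A12: "\<And>j. j \<le> L \<Longrightarrow> continuous_on UNIV (ppi j) \<and> (\<forall>z. ppi j z > 0)"
    and A13: "\<And>k j cr. 1 \<le> k \<Longrightarrow> k \<le> L \<Longrightarrow> j \<in> {k - 1, k} \<Longrightarrow> cr > 0 \<Longrightarrow>
                compact {th. Q k th / ppi j th \<le> cr}"
    and A14: "\<exists>c. 0 < c \<and> c < 1 \<and> (\<forall>k j. 1 \<le> k \<longrightarrow> k \<le> L \<longrightarrow> j \<in> {k - 1, k} \<longrightarrow>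
                (AE z in mu. Q k z / ppi j z \<ge> c))"
    and A15: "\<exists>r Cr. r > 1 \<and> Cr > 0 \<and> (\<forall>k. 1 \<le> k \<longrightarrow> k \<le> L \<longrightarrow>
                (\<integral>\<^sup>+ z. ennreal (Q k z powr r) \<partial>mu) \<le> ennreal Cr)"
    and lvl: "1 \<le> l" "l \<le> L"
  shows "\<exists>nu. invariant_prob mu ppi Q l nu
          \<and> (\<forall>nu'. invariant_prob mu ppi Q l nu' \<longrightarrow> nu' = nu)
          \<and> (\<exists>V Vmax r M. Vmax \<ge> 1 \<and>
                (\<forall>th. 1 \<le> V th \<and> V th \<le> Vmax) \<and> integrable nu V \<and>
                0 < r \<and> r < 1 \<and> 0 < M \<and>
                (\<forall>f :: 'a \<times> 'a \<Rightarrow> real. f \<in> borel_measurable borel \<longrightarrow> (\<forall>th. \<bar>f th\<bar> \<le> V th) \<longrightarrow>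
                   (\<forall>th n. \<bar>((markov_op mu ppi Q l ^^ n) f) th - (\<integral>eta. f eta \<partial>nu)\<bar>
                            \<le> M * Vmax * r ^ n)))"
proof -
  have l0: "l - 1 \<le> L" using lvl by simp
  have Qi: "integrable mu (Q l)" "(\<integral>x. Q l x \<partial>mu) = 1" using prop_dens[OF lvl] by auto
  have Qc: "continuous_on UNIV (Q l)" "\<And>z. Q l z > 0" using A11[OF lvl] by auto
  have p0: "continuous_on UNIV (ppi (l - 1))" "\<And>z. ppi (l - 1) z > 0" using A12[OF l0] by auto
  have p1: "continuous_on UNIV (ppi l)" "\<And>z. ppi l z > 0" using A12[OF lvl(2)] by auto
  have r0: "\<exists>c>0. \<forall>x. c \<le> Q l x / ppi (l - 1) x"
  proof (rule min_ratio)
    show "continuous_on UNIV (\<lambda>x. Q l x / ppi (l - 1) x)"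
    proof (intro continuous_on_divide Qc(1) p0(1) ballI)
      fix x show "ppi (l - 1) x \<noteq> 0" using p0(2)[of x] by simp
    qed
    show "\<And>x. 0 < Q l x / ppi (l - 1) x" using Qc(2) p0(2) by simp
    show "\<And>cr. 0 < cr \<Longrightarrow> compact {x. Q l x / ppi (l - 1) x \<le> cr}" using A13[OF lvl] by simp
  qed
  have r1: "\<exists>c>0. \<forall>x. c \<le> Q l x / ppi l x"
  proof (rule min_ratio)
    show "continuous_on UNIV (\<lambda>x. Q l x / ppi l x)"
    proof (intro continuous_on_divide Qc(1) p1(1) ballI)
      fix x show "ppi l x \<noteq> 0" using p1(2)[of x] by simp
    qed
    show "\<And>x. 0 < Q l x / ppi l x" using Qc(2) p1(2) by simp
    show "\<And>cr. 0 < cr \<Longrightarrow> compact {x. Q l x / ppi l x \<le> cr}" using A13[OF lvl] by simp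
  qed
  obtain c0 where c0: "c0 > 0" "\<And>x. c0 \<le> Q l x / ppi (l - 1) x" using r0 by blast
  obtain c1 where c1: "c1 > 0" "\<And>x. c1 \<le> Q l x / ppi l x" using r1 by blast
  have "conc mu ppi Q l (min c0 c1)"
    unfolding conc_def
    apply (intro conjI allI)
    apply (rule prior(1))
    apply (rule prior(2))
    apply (rule Qi(1))
    apply (rule Qi(2))
    apply (rule Qc(1))
    apply (rule Qc(2))
    apply (rule p0(1))
    apply (rule p0(2))
    apply (rule p1(1))
    apply (rule p1(2))
    apply (simp add: c0(1) c1(1))
    apply (rule min.coboundedI1, rule c0(2))
    apply (rule min.coboundedI2, rule c1(2))
    done
  then show ?thesis by (rule conc.main_conc)
qed

end
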